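(* Let $k$ be a field and let $H$ be an induced subgraph of the graph $G$ such that the complement graph $H^c$ is disconnected. Then $\operatorname{pd}^k(G)\geqslant |V(H)|-1$.
   Context: A graph is a finite simple graph with nonempty vertex set. For a graph $G$ with vertices $x_1,\dots,x_n$, $R_k(G)=k[x_1,\dots,x_n]$, $I(G)$ is the ideal generated by $x_ix_j$ for all edges $\{x_i,x_j\}$, and $\operatorname{pd}^k(G)$ is the projective dimension of the $R_k(G)$-module $R_k(G)/I(G)$. For a graph $H$, $H^c$ is the simple graph on the same vertex set in which two distinct vertices are adjacent iff they are not adjacent in $H$. An induced subgraph on a vertex subset $W$ has vertex set $W$ and all edges of $G$ with both ends in $W$. *)

theory Defs
  imports Main "HOL-Library.Poly_Mapping"
begin

text \<open>Polynomial ring k[x_v | v in V] for a finite vertex type 'v: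
  polynomials are finitely supported maps from monomials (exponent vectors) to coefficients.\<close>
type_synonym ('v, 'k) mpoly = "('v \<Rightarrow>\<^sub>0 nat) \<Rightarrow>\<^sub>0 'k"

definition var :: "'v \<Rightarrow> ('v, 'k::comm_ring_1) mpoly" where
  "var v = Poly_Mapping.single (Poly_Mapping.single v 1) 1"

text \<open>A simple graph on the finite vertex type 'v (vertex set = UNIV, nonempty):
  symmetric, irreflexive adjacency relation.\<close>
definition simple_graph :: "('v::finite \<Rightarrow> 'v \<Rightarrow> bool) \<Rightarrow> bool" where
  "simple_graph E \<longleftrightarrow> (\<forall>x y. E x y \<longrightarrow> E y x) \<and> (\<forall>x. \<not> E x x)"

definition edge_ideal :: "('v::finite \<Rightarrow> 'v \<Rightarrow> bool) \<Rightarrow> ('v, 'k::field) mpoly set" where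
  "edge_ideal E = {p. \<exists>c. p = (\<Sum>e\<in>{(i,j). E i j}. c e * var (fst e) * var (snd e))}"

text \<open>Free modules R^b are modelled as vectors nat => R vanishing from index b on;
  an R-linear map R^b -> R^a is given by a matrix.\<close>
definition vec_in :: "nat \<Rightarrow> (nat \<Rightarrow> 'r::zero) \<Rightarrow> bool" where
  "vec_in b v \<longleftrightarrow> (\<forall>j\<ge>b. v j = 0)"

definition lmap :: "nat \<Rightarrow> nat \<Rightarrow> (nat \<Rightarrow> nat \<Rightarrow> 'r::comm_ring_1) \<Rightarrow> (nat \<Rightarrow> 'r) \<Rightarrow> (nat \<Rightarrow> 'r)" where
  "lmap a b M v = (\<lambda>r. if r < a then (\<Sum>c<b. M r c * v c) else 0)"

text \<open>A finite free resolution of length n of R/I: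
   0 -> R^(bs n) --d n--> ... --d 1--> R^(bs 0) --eps--> R/I -> 0,
  where eps(v) = (sum_j v_j * e_j) mod I.  We set bs (n+1) = 0 so that exactness at
  R^(bs n) means injectivity of d n.\<close>
definition free_resolution ::
  "'r::comm_ring_1 set \<Rightarrow> nat \<Rightarrow> (nat \<Rightarrow> nat) \<Rightarrow> (nat \<Rightarrow> nat \<Rightarrow> nat \<Rightarrow> 'r) \<Rightarrow> (nat \<Rightarrow> 'r) \<Rightarrow> bool" where
  "free_resolution I n bs d e \<longleftrightarrow>
     bs (Suc n) = 0 \<and>
     \<comment> \<open>eps is surjective\<close>
     (\<exists>v. vec_in (bs 0) v \<and> (\<Sum>j<bs 0. v j * e j) - 1 \<in> I) \<and>
     \<comment> \<open>exactness at R^(bs 0): ker eps = im d 1\<close>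
     (\<forall>v. vec_in (bs 0) v \<longrightarrow>
        ((\<Sum>j<bs 0. v j * e j) \<in> I \<longleftrightarrow>
         (\<exists>w. vec_in (bs 1) w \<and> v = lmap (bs 0) (bs 1) (d 1) w))) \<and>
     \<comment> \<open>exactness at R^(bs i), 1 <= i <= n: ker d i = im d (i+1)\<close>
     (\<forall>i. 1 \<le> i \<and> i \<le> n \<longrightarrow>
        (\<forall>v. vec_in (bs i) v \<longrightarrow>
           (lmap (bs (i - 1)) (bs i) (d i) v = (\<lambda>_. 0) \<longleftrightarrow>
            (\<exists>w. vec_in (bs (Suc i)) w \<and> v = lmap (bs i) (bs (Suc i)) (d (Suc i)) w))))"

definition pd :: "'k::field itself \<Rightarrow> ('v::finite \<Rightarrow> 'v \<Rightarrow> bool) \<Rightarrow> nat" where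
  "pd _ E = (LEAST n. \<exists>bs d e. free_resolution (edge_ideal E :: ('v, 'k) mpoly set) n bs d e)"

definition complement_on :: "'v set \<Rightarrow> ('v \<Rightarrow> 'v \<Rightarrow> bool) \<Rightarrow> 'v \<Rightarrow> 'v \<Rightarrow> bool" where
  "complement_on W E x y \<longleftrightarrow> x \<in> W \<and> y \<in> W \<and> x \<noteq> y \<and> \<not> E x y"

definition connected_on :: "'v set \<Rightarrow> ('v \<Rightarrow> 'v \<Rightarrow> bool) \<Rightarrow> bool" where
  "connected_on W F \<longleftrightarrow> W \<noteq> {} \<and>
     (\<forall>x\<in>W. \<forall>y\<in>W. (x, y) \<in> ({(a, b). a \<in> W \<and> b \<in> W \<and> F a b})\<^sup>*)"

end

theory Submission
  imports Defs
begin

abbreviation lkp where "lkp \<equiv> Poly_Mapping.lookup"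
abbreviation kys where "kys \<equiv> Poly_Mapping.keys"


definition ind :: "'v::finite set \<Rightarrow> 'v \<Rightarrow>\<^sub>0 nat" where
  "ind U = Abs_poly_mapping (\<lambda>v. if v \<in> U then 1 else 0)"

lemma lookup_ind: "lkp (ind U) v = (if v \<in> U then 1 else 0)"
  unfolding ind_def by (subst lookup_Abs_poly_mapping) auto

lemma keys_ind [simp]: "kys (ind U) = U"
  by (auto simp: in_keys_iff lookup_ind split: if_splits)

definition mono :: "'v::finite set \<Rightarrow> ('v,'k::comm_ring_1) mpoly" where
  "mono U = Poly_Mapping.single (ind U) 1"

lemma lookup_single_mult:
  fixes \<alpha> \<beta> :: "'v \<Rightarrow>\<^sub>0 nat" and p :: "('v \<Rightarrow>\<^sub>0 nat) \<Rightarrow>\<^sub>0 'k::comm_ring_1"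
  shows "lkp (Poly_Mapping.single \<beta> 1 * p) \<alpha> =
    (if (\<forall>v. lkp \<beta> v \<le> lkp \<alpha> v) then lkp p (\<alpha> - \<beta>) else 0)"
proof -
  have eq: "(\<alpha> = \<beta> + q) \<longleftrightarrow> (\<forall>v. lkp \<beta> v \<le> lkp \<alpha> v) \<and> q = \<alpha> - \<beta>" for q
  proof
    assume "\<alpha> = \<beta> + q" then show "(\<forall>v. lkp \<beta> v \<le> lkp \<alpha> v) \<and> q = \<alpha> - \<beta>"
      by (auto simp: lookup_add lookup_minus intro!: poly_mapping_eqI)
  next
    assume "(\<forall>v. lkp \<beta> v \<le> lkp \<alpha> v) \<and> q = \<alpha> - \<beta>"
    then show "\<alpha> = \<beta> + q" by (auto simp: lookup_add lookup_minus intro!: poly_mapping_eqI)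
  qed
  have "lkp (Poly_Mapping.single \<beta> 1 * p) \<alpha> = (\<Sum>q. lkp p q when \<alpha> = \<beta> + q)"
    by (simp add: lookup_mult lookup_single when_mult)
  also have "\<dots> = (if (\<forall>v. lkp \<beta> v \<le> lkp \<alpha> v) then lkp p (\<alpha> - \<beta>) else 0)"
  proof (cases "\<forall>v. lkp \<beta> v \<le> lkp \<alpha> v")
    case True then show ?thesis unfolding eq by (simp add: when_def)
  next
    case False
    then have "(\<lambda>q. lkp p q when \<alpha> = \<beta> + q) = (\<lambda>_. 0)" unfolding eq when_def by (simp only: False simp_thms if_False)
    then have "Sum_any (\<lambda>q. lkp p q when \<alpha> = \<beta> + q) = Sum_any (\<lambda>_::'v \<Rightarrow>\<^sub>0 nat. 0::'k)" by (rule arg_cong)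
    then show ?thesis by (subst if_not_P[OF False]) simp
  qed
  finally show ?thesis .
qed

lemma lookup_mono_mult:
  "lkp (mono U * p) \<alpha> = (if U \<subseteq> kys \<alpha> then lkp p (\<alpha> - ind U) else 0)"
proof -
  have "(\<forall>v. lkp (ind U) v \<le> lkp \<alpha> v) \<longleftrightarrow> U \<subseteq> kys \<alpha>"
    by (auto simp: lookup_ind in_keys_iff)
  then show ?thesis unfolding mono_def lookup_single_mult by simp
qed

definition sg :: "nat \<Rightarrow> nat set \<Rightarrow> 'a::comm_ring_1" where
  "sg j T = (-1) ^ card {t\<in>T. t < j}"

lemma sg_sq: "sg j T * sg j T = (1::'a::comm_ring_1)"
  unfolding sg_def by (cases "even (card {t\<in>T. t < j})") simp_all

lemma sg_insert:
  assumes "l \<noteq> j" "l \<notin> T"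
  shows "sg j (insert l T) = (if l < j then - sg j T else (sg j T :: 'a::comm_ring_1))"
proof (cases "l < j")
  case True
  have "{t\<in>insert l T. t < j} = insert l {t\<in>T. t < j}" using True by auto
  moreover have "finite {t\<in>T. t < j}" by (rule finite_subset[of _ "{..<j}"]) auto
  ultimately show ?thesis using True assms by (simp add: sg_def)
next
  case False
  have "{t\<in>insert l T. t < j} = {t\<in>T. t < j}" using False by auto
  then show ?thesis using False by (simp add: sg_def)
qed

definition sd :: "nat \<Rightarrow> (nat set \<Rightarrow> 'a::comm_ring_1) \<Rightarrow> nat set \<Rightarrow> 'a" where
  "sd r f T = (\<Sum>j\<in>{..<r} - T. sg j T * f (insert j T))"

definition hh :: "nat \<Rightarrow> (nat set \<Rightarrow> 'a::comm_ring_1) \<Rightarrow> nat set \<Rightarrow> 'a" where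
  "hh j0 f S = (if j0 \<in> S then sg j0 (S - {j0}) * f (S - {j0}) else 0)"

lemma homotopy:
  fixes f :: "nat set \<Rightarrow> 'a::comm_ring_1"
  assumes "j0 < r"
  shows "sd r (hh j0 f) T + hh j0 (sd r f) T = f T"
proof (cases "j0 \<in> T")
  case False
  have "sd r (hh j0 f) T = (\<Sum>j\<in>{..<r} - T. if j = j0 then f T else 0)"
    unfolding sd_def
  proof (rule sum.cong[OF refl])
    fix j assume j: "j \<in> {..<r} - T"
    show "sg j T * hh j0 f (insert j T) = (if j = j0 then f T else 0)"
    proof (cases "j = j0")
      case True
      then have "insert j T - {j0} = T" using False by auto
      then show ?thesis using True by (simp add: hh_def mult.assoc[symmetric] sg_sq)
    next
      case ne: False
      then have "j0 \<notin> insert j T" using False by auto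
      then show ?thesis using ne by (simp add: hh_def)
    qed
  qed
  also have "\<dots> = f T" using assms False by (simp add: sum.delta)
  finally show ?thesis using False by (simp add: hh_def)
next
  case True
  define T' where "T' = T - {j0}"
  have T: "T = insert j0 T'" "j0 \<notin> T'" using True by (auto simp: T'_def)
  define A where "A = {..<r} - T"
  have finA: "finite A" by (simp add: A_def)
  have A': "{..<r} - T' = insert j0 A" "j0 \<notin> A" using assms T by (auto simp: A_def)
  have "hh j0 (sd r f) T = sg j0 T' * sd r f T'"
    using True by (simp add: hh_def T'_def)
  also have "\<dots> = sg j0 T' * (sg j0 T' * f T + (\<Sum>j\<in>A. sg j T' * f (insert j T')))"
    unfolding sd_def A' using finA A'(2) T(1) by (simp add: sum.insert)
  also have "\<dots> = f T + (\<Sum>j\<in>A. sg j0 T' * sg j T' * f (insert j T'))"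
    by (simp add: distrib_left sum_distrib_left mult.assoc[symmetric] sg_sq)
  finally have 1: "hh j0 (sd r f) T = f T + (\<Sum>j\<in>A. sg j0 T' * sg j T' * f (insert j T'))" .
  have 2: "sd r (hh j0 f) T = (\<Sum>j\<in>A. - (sg j0 T' * sg j T' * f (insert j T')))"
    unfolding sd_def A_def[symmetric]
  proof (rule sum.cong[OF refl])
    fix j assume j: "j \<in> A"
    then have jn: "j \<noteq> j0" "j \<notin> T'" "j \<notin> T" using T by (auto simp: A_def)
    have e: "insert j T - {j0} = insert j T'" using jn T by auto
    have s1: "sg j T = (if j0 < j then - sg j T' else (sg j T' :: 'a))"
      using T jn by (simp add: sg_insert)
    have s2: "sg j0 (insert j T') = (if j < j0 then - sg j0 T' else (sg j0 T' :: 'a))"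
      using jn by (simp add: sg_insert)
    show "sg j T * hh j0 f (insert j T) = - (sg j0 T' * sg j T' * f (insert j T'))"
    proof -
      have hh': "hh j0 f (insert j T) = sg j0 (insert j T') * f (insert j T')"
        using True e by (simp add: hh_def)
      show ?thesis
      proof (cases "j0 < j")
        case True then show ?thesis by (simp add: hh' s1 s2)
      next
        case False then have "j < j0" using jn by simp
        then show ?thesis using False by (simp add: hh' s1 s2)
      qed
    qed
  qed
  show ?thesis using 1 2 by (simp add: sum_negf)
qed

lemma sd_sd: "sd r (sd r f) T = (0::'a::comm_ring_1)"
proof -
  define A where "A = {..<r} - T"
  have finA: "finite A" by (simp add: A_def)
  define F where "F j l = sg j T * sg l (insert j T) * (f (insert l (insert j T)) :: 'a)" for j l
  have anti: "F l j = - F j l" if "j \<in> A" "l \<in> A" "j \<noteq> l" for j l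
  proof -
    have X: "insert j (insert l T) = insert l (insert j T)" by auto
    have nT: "j \<notin> T" "l \<notin> T" using that by (auto simp: A_def)
    have s1: "sg l (insert j T) = (if j < l then - sg l T else (sg l T :: 'a))"
      using that nT by (simp add: sg_insert)
    have s2: "sg j (insert l T) = (if l < j then - sg j T else (sg j T :: 'a))"
      using that nT by (simp add: sg_insert)
    show ?thesis
    proof (cases "j < l")
      case True
      then have "\<not> l < j" by simp
      then show ?thesis unfolding F_def X s1 s2 using True by (simp add: algebra_simps)
    next
      case False
      then have "l < j" using that by simp
      then show ?thesis unfolding F_def X s1 s2 using False by (simp add: algebra_simps)
    qed
  qed
  have "sd r (sd r f) T = (\<Sum>j\<in>A. \<Sum>l\<in>A - {j}. F j l)"
    unfolding sd_def A_def[symmetric]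
  proof (rule sum.cong[OF refl])
    fix j assume "j \<in> A"
    have e: "{..<r} - insert j T = A - {j}" by (auto simp: A_def)
    show "sg j T * (\<Sum>l\<in>{..<r} - insert j T. sg l (insert j T) * f (insert l (insert j T))) = (\<Sum>l\<in>A - {j}. F j l)"
      unfolding e by (simp add: sum_distrib_left F_def mult.assoc)
  qed
  also have "\<dots> = (\<Sum>j\<in>A. (\<Sum>l\<in>{l\<in>A. l < j}. F j l) + (\<Sum>l\<in>{l\<in>A. j < l}. F j l))"
  proof (rule sum.cong[OF refl])
    fix j assume "j \<in> A"
    have "A - {j} = {l\<in>A. l < j} \<union> {l\<in>A. j < l}" by auto
    then show "(\<Sum>l\<in>A - {j}. F j l) = (\<Sum>l\<in>{l\<in>A. l < j}. F j l) + (\<Sum>l\<in>{l\<in>A. j < l}. F j l)"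
      using finA by (simp add: sum.union_disjoint[symmetric] disjoint_iff)
  qed
  also have "\<dots> = (\<Sum>j\<in>A. \<Sum>l\<in>{l\<in>A. l < j}. F j l) + (\<Sum>j\<in>A. \<Sum>l\<in>{l\<in>A. j < l}. F j l)"
    by (simp add: sum.distrib)
  also have "(\<Sum>j\<in>A. \<Sum>l\<in>{l\<in>A. j < l}. F j l) = (\<Sum>l\<in>A. \<Sum>j\<in>{j\<in>A. j < l}. F j l)"
    using finA finA by (rule sum.swap_restrict)
  also have "\<dots> = (\<Sum>l\<in>A. \<Sum>j\<in>{j\<in>A. j < l}. - F l j)"
    by (rule sum.cong[OF refl], rule sum.cong[OF refl], rule anti) auto
  finally show ?thesis by (simp add: sum_negf)
qed

lemma lkp_neg1_pow_mult:
  fixes p :: "('v \<Rightarrow>\<^sub>0 nat) \<Rightarrow>\<^sub>0 'k::comm_ring_1"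
  shows "lkp ((-1) ^ n * p) \<beta> = (-1) ^ n * lkp p \<beta>"
proof (cases "even n")
  case True then show ?thesis by (simp add: neg_one_even_power[OF True])
next
  case False then have "odd n" by simp
  then show ?thesis by (simp add: neg_one_odd_power)
qed

lemma lkp_sg_mult:
  fixes p :: "('v \<Rightarrow>\<^sub>0 nat) \<Rightarrow>\<^sub>0 'k::comm_ring_1"
  shows "lkp (sg j T * p) \<beta> = sg j T * lkp p \<beta>"
  unfolding sg_def by (rule lkp_neg1_pow_mult)

lemma ind_empty [simp]: "ind {} = 0"
  by (rule poly_mapping_eqI) (simp add: lookup_ind)

lemma ind_minus_keys:
  assumes "U \<subseteq> kys \<alpha>" "D \<inter> U = {}"
  shows "D \<subseteq> kys (\<alpha> - ind U) \<longleftrightarrow> D \<subseteq> kys \<alpha>"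
  using assms unfolding subset_iff disjoint_iff by (auto simp: in_keys_iff lookup_minus lookup_ind)

lemma ind_minus_minus:
  assumes "U \<subseteq> kys \<alpha>" "D \<inter> U = {}"
  shows "(\<alpha> - ind U) - ind D = \<alpha> - ind (U \<union> D)"
  using assms by (intro poly_mapping_eqI) (auto simp: in_keys_iff lookup_minus lookup_ind)

lemma ind_minus_plus:
  assumes "U \<subseteq> kys \<alpha>"
  shows "(\<alpha> - ind U) + ind U = \<alpha>"
  using assms by (intro poly_mapping_eqI) (auto simp: in_keys_iff lookup_minus lookup_ind lookup_add)

lemma ind_plus_minus: "(\<beta> + ind U) - ind U = \<beta>"
  by (intro poly_mapping_eqI) (auto simp: lookup_minus lookup_ind lookup_add)

lemma ind_plus_keys: "U \<subseteq> kys (\<beta> + ind U)"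
  by (auto simp: in_keys_iff lookup_ind lookup_add)

definition US :: "(nat \<Rightarrow> 'v set) \<Rightarrow> nat set \<Rightarrow> 'v set" where
  "US g S = (\<Union>j\<in>S. g j)"

lemma US_insert: "US g (insert j S) = g j \<union> US g S"
  by (auto simp: US_def)

lemma US_mono: "S \<subseteq> S' \<Longrightarrow> US g S \<subseteq> US g S'"
  by (auto simp: US_def)

definition td :: "nat \<Rightarrow> (nat \<Rightarrow> 'v::finite set) \<Rightarrow> (nat set \<Rightarrow> ('v,'k::comm_ring_1) mpoly) \<Rightarrow> nat set \<Rightarrow> ('v,'k) mpoly" where
  "td r g c T = (\<Sum>j\<in>{..<r} - T. sg j T * mono (US g (insert j T) - US g T) * c (insert j T))"

definition coef :: "(nat \<Rightarrow> 'v::finite set) \<Rightarrow> (nat set \<Rightarrow> ('v,'k::comm_ring_1) mpoly) \<Rightarrow> ('v \<Rightarrow>\<^sub>0 nat) \<Rightarrow> nat set \<Rightarrow> 'k" where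
  "coef g c \<alpha> S = (if US g S \<subseteq> kys \<alpha> then lkp (c S) (\<alpha> - ind (US g S)) else 0)"

lemma coef_zero [simp]: "coef g (\<lambda>_. 0) \<alpha> S = 0"
  by (simp add: coef_def)

lemma coef_td: "coef g (td r g c) \<alpha> T = sd r (coef g c \<alpha>) T"
proof (cases "US g T \<subseteq> kys \<alpha>")
  case True
  have "coef g (td r g c) \<alpha> T = (\<Sum>j\<in>{..<r} - T. sg j T *
      lkp (mono (US g (insert j T) - US g T) * c (insert j T)) (\<alpha> - ind (US g T)))"
    by (simp add: coef_def True td_def lookup_sum mult.assoc lkp_sg_mult)
  also have "\<dots> = (\<Sum>j\<in>{..<r} - T. sg j T * coef g c \<alpha> (insert j T))"
  proof (rule sum.cong[OF refl])
    fix j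
    define U where "U = US g T"
    define D where "D = US g (insert j T) - U"
    have UD: "US g (insert j T) = U \<union> D" using US_mono[of T "insert j T" g] by (auto simp: U_def D_def)
    have dis: "D \<inter> U = {}" by (auto simp: D_def)
    have TU: "U \<subseteq> kys \<alpha>" using True by (simp add: U_def)
    have "lkp (mono D * c (insert j T)) (\<alpha> - ind U) = coef g c \<alpha> (insert j T)"
      unfolding lookup_mono_mult coef_def UD
      using ind_minus_keys[OF TU dis] ind_minus_minus[OF TU dis] TU by auto
    then show "sg j T * lkp (mono (US g (insert j T) - US g T) * c (insert j T)) (\<alpha> - ind (US g T)) =
      sg j T * coef g c \<alpha> (insert j T)" by (simp add: U_def D_def)
  qed
  finally show ?thesis by (simp add: sd_def)
next
  case False
  have "coef g c \<alpha> (insert j T) = 0" for j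
    using False US_mono[of T "insert j T" g] by (auto simp: coef_def)
  then show ?thesis using False by (simp add: sd_def coef_def)
qed

lemma coef_inj:
  assumes "\<And>\<alpha>. coef g c \<alpha> S = coef g c' \<alpha> S"
  shows "c S = c' S"
proof (rule poly_mapping_eqI)
  fix \<beta>
  have "coef g c (\<beta> + ind (US g S)) S = coef g c' (\<beta> + ind (US g S)) S" by (rule assms)
  then show "lkp (c S) \<beta> = lkp (c' S) \<beta>"
    by (simp add: coef_def ind_plus_keys ind_plus_minus)
qed

lemma td_td: "td r g (td r g c) T = 0"
proof -
  have "coef g (td r g (td r g c)) \<alpha> T = coef g (\<lambda>_. 0) \<alpha> T" for \<alpha>
  proof -
    have "coef g (td r g c) \<alpha> = sd r (coef g c \<alpha>)" by (rule ext) (rule coef_td)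
    then show ?thesis by (simp add: coef_td sd_sd)
  qed
  then show ?thesis using coef_inj[of g "td r g (td r g c)" T "\<lambda>_. 0"] by simp
qed

lemma taylor_exact:
  fixes c :: "nat set \<Rightarrow> ('v::finite,'k::comm_ring_1) mpoly"
  assumes cyc: "\<And>T. td r g c T = 0"
    and H: "\<And>\<alpha> S. coef g c \<alpha> S \<noteq> 0 \<Longrightarrow> \<exists>j<r. g j \<subseteq> kys \<alpha>"
    and deg: "\<And>S. c S \<noteq> 0 \<Longrightarrow> S \<subseteq> {..<r} \<and> card S = p"
  shows "\<exists>b. (\<forall>S. b S \<noteq> 0 \<longrightarrow> S \<subseteq> {..<r} \<and> card S = Suc p) \<and> (\<forall>T. td r g b T = c T)"
proof -
  define J where "J \<alpha> = {j. j < r \<and> g j \<subseteq> kys \<alpha>}" for \<alpha> :: "'v \<Rightarrow>\<^sub>0 nat"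
  define F where "F \<alpha> = (if J \<alpha> = {} then (\<lambda>_. 0) else hh (Min (J \<alpha>)) (coef g c \<alpha>))" for \<alpha>
  have finJ: "finite (J \<alpha>)" for \<alpha> by (simp add: J_def)
  have F_nz: "J \<alpha> \<noteq> {} \<and> Min (J \<alpha>) \<in> S \<and> Min (J \<alpha>) < r \<and> g (Min (J \<alpha>)) \<subseteq> kys \<alpha> \<and>
      coef g c \<alpha> (S - {Min (J \<alpha>)}) \<noteq> 0" if "F \<alpha> S \<noteq> 0" for \<alpha> S
  proof -
    have ne: "J \<alpha> \<noteq> {}" using that by (auto simp: F_def)
    have "Min (J \<alpha>) \<in> J \<alpha>" using ne finJ by simp
    then show ?thesis using that ne by (auto simp: F_def hh_def J_def split: if_splits)
  qed
  have US_split: "US g S = g j \<union> US g (S - {j})" if "j \<in> S" for S j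
    using that by (auto simp: US_def)
  have fin: "finite {\<beta>. F (\<beta> + ind (US g S)) S \<noteq> 0}" for S
  proof (rule finite_subset)
    show "{\<beta>. F (\<beta> + ind (US g S)) S \<noteq> 0} \<subseteq>
      (\<Union>j<r. (\<lambda>\<gamma>. (\<gamma> + ind (US g (S - {j}))) - ind (US g S)) ` kys (c (S - {j})))"
    proof
      fix \<beta> assume "\<beta> \<in> {\<beta>. F (\<beta> + ind (US g S)) S \<noteq> 0}"
      then have nz: "F (\<beta> + ind (US g S)) S \<noteq> 0" by simp
      define \<alpha> where "\<alpha> = \<beta> + ind (US g S)"
      define j where "j = Min (J \<alpha>)"
      have f: "j < r" "coef g c \<alpha> (S - {j}) \<noteq> 0" using F_nz[OF nz] by (auto simp: j_def \<alpha>_def)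
      then have sub: "US g (S - {j}) \<subseteq> kys \<alpha>" and inn: "\<alpha> - ind (US g (S - {j})) \<in> kys (c (S - {j}))"
        by (auto simp: coef_def in_keys_iff split: if_splits)
      have "((\<alpha> - ind (US g (S - {j}))) + ind (US g (S - {j}))) - ind (US g S) = \<beta>"
        using ind_minus_plus[OF sub] by (simp add: \<alpha>_def ind_plus_minus)
      then show "\<beta> \<in> (\<Union>j<r. (\<lambda>\<gamma>. (\<gamma> + ind (US g (S - {j}))) - ind (US g S)) ` kys (c (S - {j})))"
        using f(1) inn by (auto intro!: bexI[of _ j] image_eqI[of _ _ "\<alpha> - ind (US g (S - {j}))"])
    qed
  qed auto
  define b where "b S = Abs_poly_mapping (\<lambda>\<beta>. F (\<beta> + ind (US g S)) S)" for S
  have lkp_b: "lkp (b S) \<beta> = F (\<beta> + ind (US g S)) S" for S \<beta>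
    unfolding b_def using fin[of S] by simp
  have coef_b: "coef g b \<alpha> S = F \<alpha> S" for \<alpha> S
  proof (cases "US g S \<subseteq> kys \<alpha>")
    case True then show ?thesis by (simp add: coef_def lkp_b ind_minus_plus)
  next
    case False
    have "F \<alpha> S = 0"
    proof (rule ccontr)
      assume "F \<alpha> S \<noteq> 0"
      note f = F_nz[OF this]
      then have "US g (S - {Min (J \<alpha>)}) \<subseteq> kys \<alpha>" by (auto simp: coef_def split: if_splits)
      then have "US g S \<subseteq> kys \<alpha>" using f US_split[of "Min (J \<alpha>)" S] by auto
      then show False using False by simp
    qed
    then show ?thesis using False by (simp add: coef_def)
  qed
  have tdz: "td r g c = (\<lambda>_. 0)" using cyc by auto
  have cyc': "coef g (td r g c) \<alpha> = (\<lambda>_. 0)" for \<alpha> by (simp add: tdz fun_eq_iff)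
  have main: "coef g (td r g b) \<alpha> T = coef g c \<alpha> T" for \<alpha> T
  proof -
    have "coef g (td r g b) \<alpha> T = sd r (F \<alpha>) T"
      by (simp add: coef_td coef_b[abs_def])
    also have "\<dots> = coef g c \<alpha> T"
    proof (cases "J \<alpha> = {}")
      case True
      have "coef g c \<alpha> T = 0" using H[of \<alpha> T] True by (auto simp: J_def)
      then show ?thesis using True by (simp add: F_def sd_def)
    next
      case False
      have m: "Min (J \<alpha>) < r" using False finJ[of \<alpha>] Min_in[of "J \<alpha>"] by (auto simp: J_def)
      have sdz: "sd r (coef g c \<alpha>) = (\<lambda>_. 0)"
        using cyc'[of \<alpha>] by (simp add: fun_eq_iff coef_td)
      have "hh (Min (J \<alpha>)) (\<lambda>_. 0::'k) T = 0" by (simp add: hh_def)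
      then show ?thesis using homotopy[OF m, of "coef g c \<alpha>" T] False sdz by (simp add: F_def)
    qed
    finally show ?thesis .
  qed
  have degb: "S \<subseteq> {..<r} \<and> card S = Suc p" if "b S \<noteq> 0" for S
  proof -
    have "\<exists>\<beta>. lkp (b S) \<beta> \<noteq> 0"
    proof (rule ccontr)
      assume "\<not> ?thesis"
      then have "b S = 0" by (intro poly_mapping_eqI) auto
      then show False using that by simp
    qed
    then obtain \<beta> where "lkp (b S) \<beta> \<noteq> 0" by blast
    then have nz: "F (\<beta> + ind (US g S)) S \<noteq> 0" by (simp add: lkp_b)
    define j where "j = Min (J (\<beta> + ind (US g S)))"
    have f: "j \<in> S" "j < r" "coef g c (\<beta> + ind (US g S)) (S - {j}) \<noteq> 0"
      using F_nz[OF nz] by (auto simp: j_def)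
    then have "c (S - {j}) \<noteq> 0" by (auto simp: coef_def split: if_splits)
    then have d: "S - {j} \<subseteq> {..<r}" "card (S - {j}) = p" using deg by auto
    have "finite (S - {j})" using d(1) finite_subset by blast
    then have finS: "finite S" by simp
    have "card S > 0" using finS f(1) card_gt_0_iff by blast
    then show ?thesis using d f finS by (auto simp: card_Diff_singleton)
  qed
  show ?thesis
    by (rule exI[of _ b]) (use degb coef_inj main in blast)
qed

definition deg :: "nat \<Rightarrow> nat \<Rightarrow> (nat set \<Rightarrow> 'a::zero) \<Rightarrow> bool" where
  "deg r p c \<longleftrightarrow> (\<forall>S. c S \<noteq> 0 \<longrightarrow> S \<subseteq> {..<r} \<and> card S = p)"

lemma td_deg:
  assumes "deg r (Suc p) c"
  shows "deg r p (td r g c)"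
  unfolding deg_def
proof (intro allI impI)
  fix T assume "td r g c T \<noteq> 0"
  then obtain j where j0: "j \<in> {..<r} - T" "sg j T * mono (US g (insert j T) - US g T) * c (insert j T) \<noteq> 0"
    unfolding td_def by (rule sum.not_neutral_contains_not_neutral)
  then have j: "j \<in> {..<r} - T" "c (insert j T) \<noteq> 0" by auto
  then have d: "insert j T \<subseteq> {..<r}" "card (insert j T) = Suc p" using assms by (auto simp: deg_def)
  have "finite (insert j T)" using d(1) by (rule finite_subset) simp
  then have "finite T" by simp
  then show "T \<subseteq> {..<r} \<and> card T = p" using d j by auto
qed

lemma td_deg0:
  assumes "deg r 0 c"
  shows "td r g c T = 0"
proof -
  have "c (insert j T) = 0" for j
  proof (rule ccontr)
    assume "c (insert j T) \<noteq> 0"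
    then have "insert j T \<subseteq> {..<r}" "card (insert j T) = 0" using assms by (auto simp: deg_def)
    then have "finite (insert j T)" "card (insert j T) = 0" using finite_subset by auto
    then show False by simp
  qed
  then show ?thesis by (simp add: td_def)
qed

lemma H_auto:
  assumes "deg r p c" "p \<ge> 1" "coef g c \<alpha> S \<noteq> 0"
  shows "\<exists>j<r. g j \<subseteq> kys \<alpha>"
proof -
  have c: "c S \<noteq> 0" "US g S \<subseteq> kys \<alpha>" using assms(3) by (auto simp: coef_def split: if_splits)
  then have "S \<subseteq> {..<r}" "card S = p" using assms(1) by (auto simp: deg_def)
  moreover have "S \<noteq> {}" using \<open>card S = p\<close> assms(2) by auto
  ultimately obtain j where "j \<in> S" "j < r" by blast
  then show ?thesis using c(2) by (auto simp: US_def)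
qed

lemma td_lin:
  "td r g (\<lambda>S. \<Sum>x\<in>C. a x * f x S) T = (\<Sum>x\<in>C. a x * td r g (f x) T)"
proof -
  have "td r g (\<lambda>S. \<Sum>x\<in>C. a x * f x S) T =
    (\<Sum>j\<in>{..<r} - T. \<Sum>x\<in>C. a x * (sg j T * mono (US g (insert j T) - US g T) * f x (insert j T)))"
    unfolding td_def sum_distrib_left by (simp add: mult.left_commute)
  also have "\<dots> = (\<Sum>x\<in>C. \<Sum>j\<in>{..<r} - T. a x * (sg j T * mono (US g (insert j T) - US g T) * f x (insert j T)))"
    by (rule sum.swap)
  also have "\<dots> = (\<Sum>x\<in>C. a x * td r g (f x) T)"
    unfolding td_def sum_distrib_left ..
  finally show ?thesis .
qed

definition Sets :: "nat \<Rightarrow> nat \<Rightarrow> nat set set" where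
  "Sets r i = {S. S \<subseteq> {..<r} \<and> card S = i}"

definition bsT :: "nat \<Rightarrow> nat \<Rightarrow> nat" where
  "bsT r i = card (Sets r i)"

definition en :: "nat \<Rightarrow> nat \<Rightarrow> nat \<Rightarrow> nat set" where
  "en r i = (SOME h. bij_betw h {0..<bsT r i} (Sets r i))"

definition cho :: "nat \<Rightarrow> nat \<Rightarrow> (nat \<Rightarrow> 'a::zero) \<Rightarrow> nat set \<Rightarrow> 'a" where
  "cho r i v = (\<lambda>S. if S \<in> Sets r i then v (inv_into {0..<bsT r i} (en r i) S) else 0)"

definition vco :: "nat \<Rightarrow> nat \<Rightarrow> (nat set \<Rightarrow> 'a::zero) \<Rightarrow> nat \<Rightarrow> 'a" where
  "vco r i c = (\<lambda>k. if k < bsT r i then c (en r i k) else 0)"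

definition dT :: "nat \<Rightarrow> (nat \<Rightarrow> 'v::finite set) \<Rightarrow> nat \<Rightarrow> nat \<Rightarrow> nat \<Rightarrow> ('v,'k::comm_ring_1) mpoly" where
  "dT r g i row col = td r g (\<lambda>S. if S = en r i col then 1 else 0) (en r (i - 1) row)"

lemma finite_Sets: "finite (Sets r i)"
  by (rule finite_subset[of _ "Pow {..<r}"]) (auto simp: Sets_def)

lemma en_bij: "bij_betw (en r i) {0..<bsT r i} (Sets r i)"
proof -
  have "\<exists>h. bij_betw h {0..<bsT r i} (Sets r i)"
    unfolding bsT_def by (rule ex_bij_betw_nat_finite[OF finite_Sets])
  then show ?thesis unfolding en_def by (rule someI_ex)
qed

lemma en_in: "k < bsT r i \<Longrightarrow> en r i k \<in> Sets r i"
  using en_bij[of r i] by (auto simp: bij_betw_def)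

lemma en_inj: "inj_on (en r i) {0..<bsT r i}"
  using en_bij[of r i] by (auto simp: bij_betw_def)

lemma inv_en: "S \<in> Sets r i \<Longrightarrow> inv_into {0..<bsT r i} (en r i) S < bsT r i \<and> en r i (inv_into {0..<bsT r i} (en r i) S) = S"
proof -
  assume S: "S \<in> Sets r i"
  have "S \<in> en r i ` {0..<bsT r i}" using en_bij[of r i] S by (simp add: bij_betw_def)
  then show ?thesis using inv_into_into[of S "en r i" "{0..<bsT r i}"] f_inv_into_f[of S "en r i" "{0..<bsT r i}"]
    by simp
qed

lemma deg_Sets: "deg r p c \<longleftrightarrow> (\<forall>S. c S \<noteq> 0 \<longrightarrow> S \<in> Sets r p)"
  by (simp add: deg_def Sets_def)

lemma vco_cho: "vec_in (bsT r i) v \<Longrightarrow> vco r i (cho r i v) = v"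
  by (auto simp: vco_def cho_def vec_in_def en_in en_inj fun_eq_iff)

lemma cho_vco: "deg r i c \<Longrightarrow> cho r i (vco r i c) = c"
  by (auto simp: vco_def cho_def deg_Sets fun_eq_iff inv_en)

lemma cho_deg: "deg r i (cho r i v)"
  by (auto simp: cho_def deg_Sets)

lemma vco_vec_in: "vec_in (bsT r i) (vco r i c)"
  by (simp add: vco_def vec_in_def)

lemma cho_sum:
  fixes v :: "nat \<Rightarrow> 'a::comm_ring_1"
  shows "cho r i v = (\<lambda>S. \<Sum>col<bsT r i. v col * (if S = en r i col then 1 else 0))"
proof (rule ext)
  fix S
  show "cho r i v S = (\<Sum>col<bsT r i. v col * (if S = en r i col then 1 else 0))"
  proof (cases "S \<in> Sets r i")
    case True
    define k where "k = inv_into {0..<bsT r i} (en r i) S"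
    have k: "k < bsT r i" "en r i k = S" using inv_en[OF True] by (auto simp: k_def)
    have "(\<Sum>col<bsT r i. v col * (if S = en r i col then 1 else 0)) = (\<Sum>col<bsT r i. if col = k then v k else 0)"
    proof (rule sum.cong[OF refl])
      fix col assume "col \<in> {..<bsT r i}"
      then have h: "(S = en r i col) = (col = k)" using k en_inj[of r i] by (auto dest: inj_onD)
      show "v col * (if S = en r i col then 1 else 0) = (if col = k then v k else 0)" by (simp only: h) simp
    qed
    also have "\<dots> = v k" using k by simp
    finally show ?thesis using True by (simp add: cho_def k_def)
  next
    case False
    then have "S \<noteq> en r i col" if "col < bsT r i" for col using en_in[OF that] by auto
    then show ?thesis using False by (simp add: cho_def)
  qed
qed

lemma lmap_dT:
  assumes "vec_in (bsT r i) v"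
  shows "lmap (bsT r (i - 1)) (bsT r i) (dT r g i) v = vco r (i - 1) (td r g (cho r i v))"
proof (rule ext)
  fix row
  have "(\<Sum>col<bsT r i. dT r g i row col * v col) = td r g (cho r i v) (en r (i - 1) row)"
    unfolding cho_sum td_lin dT_def by (simp add: mult.commute)
  then show "lmap (bsT r (i - 1)) (bsT r i) (dT r g i) v row = vco r (i - 1) (td r g (cho r i v)) row"
    by (simp add: lmap_def vco_def)
qed

lemma vco_zero_iff: "deg r i c \<Longrightarrow> vco r i c = (\<lambda>_. 0) \<longleftrightarrow> c = (\<lambda>_. 0)"
proof
  assume d: "deg r i c" and "vco r i c = (\<lambda>_. 0)"
  then have "cho r i (\<lambda>_. 0) = c" using cho_vco[OF d] by simp
  then show "c = (\<lambda>_. 0)" by (simp add: cho_def fun_eq_iff)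
qed (simp add: vco_def fun_eq_iff)

lemma Sets_0: "Sets r 0 = {{}}"
proof -
  have "S = {}" if "S \<subseteq> {..<r}" "card S = 0" for S
    using finite_subset[OF that(1) finite_lessThan] that(2) by simp
  then show ?thesis by (auto simp: Sets_def)
qed

lemma bsT_0: "bsT r 0 = 1"
  by (simp add: bsT_def Sets_0)

lemma en_0: "en r 0 0 = {}"
  using en_in[of 0 r 0] by (simp add: bsT_0 Sets_0)

lemma bsT_Suc: "bsT r (Suc r) = 0"
proof -
  have "Sets r (Suc r) = {}"
  proof (rule ccontr)
    assume "Sets r (Suc r) \<noteq> {}"
    then obtain S where "S \<subseteq> {..<r}" "card S = Suc r" by (auto simp: Sets_def)
    then show False using card_mono[of "{..<r}" S] by simp
  qed
  then show ?thesis by (simp add: bsT_def)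
qed

lemma taylor_resolution:
  fixes I :: "('v::finite,'k::comm_ring_1) mpoly set" and g :: "nat \<Rightarrow> 'v set"
  assumes I0: "0 \<in> I"
    and I1: "\<And>b. td r g b {} \<in> I"
    and I2: "\<And>p \<alpha>. p \<in> I \<Longrightarrow> lkp p \<alpha> \<noteq> 0 \<Longrightarrow> \<exists>j<r. g j \<subseteq> kys \<alpha>"
  shows "free_resolution I r (bsT r) (dT r g) (\<lambda>_. 1)"
  unfolding free_resolution_def
proof (intro conjI)
  show "bsT r (Suc r) = 0" by (rule bsT_Suc)
  show "\<exists>v. vec_in (bsT r 0) v \<and> (\<Sum>j<bsT r 0. v j * 1) - 1 \<in> I"
    by (rule exI[of _ "\<lambda>j. if j = 0 then 1 else 0"]) (simp add: bsT_0 vec_in_def I0)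
  show "\<forall>v. vec_in (bsT r 0) v \<longrightarrow> ((\<Sum>j<bsT r 0. v j * 1) \<in> I) =
      (\<exists>w. vec_in (bsT r 1) w \<and> v = lmap (bsT r 0) (bsT r 1) (dT r g 1) w)"
  proof (intro allI impI)
    fix v :: "nat \<Rightarrow> ('v,'k) mpoly" assume v: "vec_in (bsT r 0) v"
    have lm: "lmap (bsT r 0) (bsT r 1) (dT r g 1) w = vco r 0 (td r g (cho r 1 w))" if "vec_in (bsT r 1) w" for w
      using lmap_dT[OF that, of g] by simp
    have c0: "cho r 0 v {} = v 0"
      using inv_en[of "{}" r 0] by (simp add: cho_def Sets_0 bsT_0)
    show "((\<Sum>j<bsT r 0. v j * 1) \<in> I) = (\<exists>w. vec_in (bsT r 1) w \<and> v = lmap (bsT r 0) (bsT r 1) (dT r g 1) w)"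
    proof
      assume "(\<Sum>j<bsT r 0. v j * 1) \<in> I"
      then have vI: "v 0 \<in> I" by (simp add: bsT_0)
      have H: "\<exists>j<r. g j \<subseteq> kys \<alpha>" if "coef g (cho r 0 v) \<alpha> S \<noteq> 0" for \<alpha> S
      proof -
        have "cho r 0 v S \<noteq> 0" using that by (auto simp: coef_def split: if_splits)
        then have "S = {}" using cho_deg[of r 0 v] by (auto simp: deg_Sets Sets_0)
        then have "lkp (v 0) \<alpha> \<noteq> 0" using that c0 by (simp add: coef_def US_def)
        then show ?thesis using I2[OF vI] by blast
      qed
      have dg: "\<And>S. cho r 0 v S \<noteq> 0 \<Longrightarrow> S \<subseteq> {..<r} \<and> card S = 0"
        using cho_deg[of r 0 v] unfolding deg_def by blast
      have cy: "\<And>T. td r g (cho r 0 v) T = 0" by (rule td_deg0[OF cho_deg])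
      have "\<exists>b. (\<forall>S. b S \<noteq> 0 \<longrightarrow> S \<subseteq> {..<r} \<and> card S = Suc 0) \<and> (\<forall>T. td r g b T = cho r 0 v T)"
        by (rule taylor_exact, rule cy, erule H, erule dg)
      then obtain b where
        b: "\<forall>S. b S \<noteq> 0 \<longrightarrow> S \<subseteq> {..<r} \<and> card S = Suc 0" "\<forall>T. td r g b T = cho r 0 v T"
        by blast
      have db: "deg r 1 b" using b(1) by (simp add: deg_def)
      show "\<exists>w. vec_in (bsT r 1) w \<and> v = lmap (bsT r 0) (bsT r 1) (dT r g 1) w"
      proof (intro exI conjI)
        show "vec_in (bsT r 1) (vco r 1 b)" by (rule vco_vec_in)
        have tdb: "td r g b = cho r 0 v" using b(2) by auto
        have "lmap (bsT r 0) (bsT r 1) (dT r g 1) (vco r 1 b) = vco r 0 (td r g (cho r 1 (vco r 1 b)))"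
          by (rule lm[OF vco_vec_in])
        also have "\<dots> = vco r 0 (td r g b)" using cho_vco[OF db] by simp
        also have "\<dots> = v" using tdb vco_cho[OF v] by simp
        finally show "v = lmap (bsT r 0) (bsT r 1) (dT r g 1) (vco r 1 b)" by simp
      qed
    next
      assume "\<exists>w. vec_in (bsT r 1) w \<and> v = lmap (bsT r 0) (bsT r 1) (dT r g 1) w"
      then obtain w where w: "vec_in (bsT r 1) w" "v = vco r 0 (td r g (cho r 1 w))" using lm by blast
      then have "v 0 = td r g (cho r 1 w) {}" by (simp add: vco_def bsT_0 en_0)
      then show "(\<Sum>j<bsT r 0. v j * 1) \<in> I" using I1 by (simp add: bsT_0)
    qed
  qed
  have EX: "(lmap (bsT r (i - 1)) (bsT r i) (dT r g i) v = (\<lambda>_. 0)) =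
      (\<exists>w. vec_in (bsT r (Suc i)) w \<and> v = lmap (bsT r i) (bsT r (Suc i)) (dT r g (Suc i)) w)"
    if i: "1 \<le> i \<and> i \<le> r" and v: "vec_in (bsT r i) v" for i and v :: "nat \<Rightarrow> ('v,'k) mpoly"
  proof -
    obtain p where p: "i = Suc p" using i by (cases i) auto
    have dc: "deg r (i - 1) (td r g (cho r i v))" using td_deg[of r p "cho r i v" g] cho_deg[of r i v] p by simp
    have lm: "lmap (bsT r i) (bsT r (Suc i)) (dT r g (Suc i)) w = vco r i (td r g (cho r (Suc i) w))"
      if "vec_in (bsT r (Suc i)) w" for w
      using lmap_dT[OF that, of g] by simp
    show "(lmap (bsT r (i - 1)) (bsT r i) (dT r g i) v = (\<lambda>_. 0)) =
      (\<exists>w. vec_in (bsT r (Suc i)) w \<and> v = lmap (bsT r i) (bsT r (Suc i)) (dT r g (Suc i)) w)"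
    proof
      assume "lmap (bsT r (i - 1)) (bsT r i) (dT r g i) v = (\<lambda>_. 0)"
      then have z: "td r g (cho r i v) = (\<lambda>_. 0)"
        unfolding lmap_dT[OF v] using vco_zero_iff[OF dc] by simp
      have H: "\<exists>j<r. g j \<subseteq> kys \<alpha>" if "coef g (cho r i v) \<alpha> S \<noteq> 0" for \<alpha> S
        using H_auto[OF cho_deg _ that] i by simp
      have dg: "\<And>S. cho r i v S \<noteq> 0 \<Longrightarrow> S \<subseteq> {..<r} \<and> card S = i"
        using cho_deg[of r i v] unfolding deg_def by blast
      have cy: "\<And>T. td r g (cho r i v) T = 0" using z by simp
      have "\<exists>b. (\<forall>S. b S \<noteq> 0 \<longrightarrow> S \<subseteq> {..<r} \<and> card S = Suc i) \<and> (\<forall>T. td r g b T = cho r i v T)"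
        by (rule taylor_exact, rule cy, erule H, erule dg)
      then obtain b where
        b: "\<forall>S. b S \<noteq> 0 \<longrightarrow> S \<subseteq> {..<r} \<and> card S = Suc i" "\<forall>T. td r g b T = cho r i v T"
        by blast
      have db: "deg r (Suc i) b" using b(1) by (simp add: deg_def)
      show "\<exists>w. vec_in (bsT r (Suc i)) w \<and> v = lmap (bsT r i) (bsT r (Suc i)) (dT r g (Suc i)) w"
      proof (intro exI conjI)
        show "vec_in (bsT r (Suc i)) (vco r (Suc i) b)" by (rule vco_vec_in)
        have tdb: "td r g b = cho r i v" using b(2) by auto
        have "lmap (bsT r i) (bsT r (Suc i)) (dT r g (Suc i)) (vco r (Suc i) b) = vco r i (td r g (cho r (Suc i) (vco r (Suc i) b)))"
          by (rule lm[OF vco_vec_in])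
        also have "\<dots> = vco r i (td r g b)" using cho_vco[OF db] by simp
        also have "\<dots> = v" using tdb vco_cho[OF v] by simp
        finally show "v = lmap (bsT r i) (bsT r (Suc i)) (dT r g (Suc i)) (vco r (Suc i) b)" by simp
      qed
    next
      assume "\<exists>w. vec_in (bsT r (Suc i)) w \<and> v = lmap (bsT r i) (bsT r (Suc i)) (dT r g (Suc i)) w"
      then obtain w where w: "vec_in (bsT r (Suc i)) w" "v = vco r i (td r g (cho r (Suc i) w))" using lm by blast
      have dw: "deg r i (td r g (cho r (Suc i) w))" using td_deg[OF cho_deg] by blast
      have ceq: "cho r i v = td r g (cho r (Suc i) w)" using w(2) cho_vco[OF dw] by simp
      have "td r g (cho r i v) = (\<lambda>_. 0)" unfolding ceq by (simp add: td_td fun_eq_iff)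
      then show "lmap (bsT r (i - 1)) (bsT r i) (dT r g i) v = (\<lambda>_. 0)"
        unfolding lmap_dT[OF v] by (simp add: vco_def fun_eq_iff)
    qed
  qed
  then show "\<forall>i. 1 \<le> i \<and> i \<le> r \<longrightarrow> (\<forall>v. vec_in (bsT r i) v \<longrightarrow>
      (lmap (bsT r (i - 1)) (bsT r i) (dT r g i) v = (\<lambda>_. 0::('v,'k) mpoly)) =
      (\<exists>w. vec_in (bsT r (Suc i)) w \<and> v = lmap (bsT r i) (bsT r (Suc i)) (dT r g (Suc i)) w))"
    by blast
qed

lemma ind_single: "ind {v} = Poly_Mapping.single v 1"
  by (rule poly_mapping_eqI) (simp add: lookup_ind lookup_single when_def)

lemma var_mono: "var v = (mono {v} :: ('v::finite,'k::comm_ring_1) mpoly)"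
  by (simp add: var_def mono_def ind_single)

lemma var_mult:
  assumes "u \<noteq> v"
  shows "var u * var v = (mono {u,v} :: ('v::finite,'k::comm_ring_1) mpoly)"
proof -
  have "ind {u} + ind {v} = ind {u,v}"
    using assms by (intro poly_mapping_eqI) (simp add: lookup_ind lookup_add)
  then show ?thesis by (simp add: var_mono mono_def mult_single)
qed

lemma ei_intro:
  "p = (\<Sum>e\<in>{(i,j). E i j}. c e * var (fst e) * var (snd e)) \<Longrightarrow> p \<in> edge_ideal E"
  unfolding edge_ideal_def by blast

lemma ei_0: "0 \<in> edge_ideal E"
  unfolding edge_ideal_def by (rule CollectI, rule exI[of _ "\<lambda>_. 0"]) simp

lemma ei_add:
  assumes "p \<in> edge_ideal E" "q \<in> edge_ideal E"
  shows "p + q \<in> edge_ideal E"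
proof -
  obtain c1 c2 where "p = (\<Sum>e\<in>{(i,j). E i j}. c1 e * var (fst e) * var (snd e))"
    "q = (\<Sum>e\<in>{(i,j). E i j}. c2 e * var (fst e) * var (snd e))"
    using assms unfolding edge_ideal_def by blast
  then have "p + q = (\<Sum>e\<in>{(i,j). E i j}. (c1 e + c2 e) * var (fst e) * var (snd e))"
    by (simp add: sum.distrib distrib_right)
  then show ?thesis by (rule ei_intro)
qed

lemma ei_mult:
  assumes "p \<in> edge_ideal E"
  shows "q * p \<in> edge_ideal E"
proof -
  obtain c where "p = (\<Sum>e\<in>{(i,j). E i j}. c e * var (fst e) * var (snd e))"
    using assms unfolding edge_ideal_def by blast
  then have "q * p = (\<Sum>e\<in>{(i,j). E i j}. (q * c e) * var (fst e) * var (snd e))"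
    by (simp add: sum_distrib_left mult.assoc)
  then show ?thesis by (rule ei_intro)
qed

lemma ei_diff:
  assumes "p \<in> edge_ideal E" "q \<in> edge_ideal E"
  shows "p - q \<in> edge_ideal E"
proof -
  have "p - q = p + (-1) * q" by simp
  have m: "- q \<in> edge_ideal E" using ei_mult[OF assms(2), of "-1"] by simp
  show ?thesis using ei_add[OF assms(1) m] by simp
qed

lemma ei_sum:
  assumes "\<And>i. i \<in> A \<Longrightarrow> f i \<in> edge_ideal E"
  shows "sum f A \<in> edge_ideal E"
  using assms
proof (induction A rule: infinite_finite_induct)
  case (infinite A) then show ?case by (simp add: ei_0)
next
  case empty then show ?case by (simp add: ei_0)
next
  case (insert x F) then show ?case by (simp add: ei_add)
qed

lemma ei_edge:
  assumes "E u v"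
  shows "q * (var u * var v) \<in> edge_ideal E"
proof -
  have fin: "finite {(i,j). E i j}" by simp
  have "q * (var u * var v) = (\<Sum>e\<in>{(i,j). E i j}. (if e = (u,v) then q else 0) * var (fst e) * var (snd e))"
    using assms fin by (simp add: if_distrib[of "\<lambda>x. x * _"] sum.delta mult.assoc cong: if_cong)
  then show ?thesis by (rule ei_intro)
qed

lemma ei_keys:
  assumes G: "simple_graph E" and p: "p \<in> edge_ideal E" and nz: "lkp p \<alpha> \<noteq> 0"
  shows "\<exists>u v. E u v \<and> {u,v} \<subseteq> kys \<alpha>"
proof -
  obtain c where pc: "p = (\<Sum>e\<in>{(i,j). E i j}. c e * var (fst e) * var (snd e))"
    using p unfolding edge_ideal_def by blast
  have "(\<Sum>e\<in>{(i,j). E i j}. lkp (c e * var (fst e) * var (snd e)) \<alpha>) \<noteq> 0"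
    using nz by (simp add: pc lookup_sum)
  then obtain e where e: "e \<in> {(i,j). E i j}" "lkp (c e * var (fst e) * var (snd e)) \<alpha> \<noteq> 0"
    by (rule sum.not_neutral_contains_not_neutral)
  obtain u v where uv: "e = (u,v)" "E u v" using e(1) by auto
  have "u \<noteq> v" using G uv(2) by (auto simp: simple_graph_def)
  have "c e * var u * var v = mono {u,v} * c e"
    unfolding mult.assoc var_mult[OF \<open>u \<noteq> v\<close>] by (rule mult.commute)
  then have "lkp (mono {u,v} * c e) \<alpha> \<noteq> 0" using e(2) uv(1) by simp
  then have "{u,v} \<subseteq> kys \<alpha>" by (simp add: lookup_mono_mult split: if_splits)
  then show ?thesis using uv by blast
qed

lemma pd_exists:
  fixes E :: "'v::finite \<Rightarrow> 'v \<Rightarrow> bool"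
  assumes G: "simple_graph E"
  shows "\<exists>n bs d e. free_resolution (edge_ideal E :: ('v,'k::field) mpoly set) n bs d e"
proof -
  define Ed where "Ed = {(i,j). E i j}"
  have fin: "finite Ed" by (simp add: Ed_def)
  obtain ed where ed: "bij_betw ed {0..<card Ed} Ed" using ex_bij_betw_nat_finite[OF fin] by blast
  define r where "r = card Ed"
  define g where "g j = {fst (ed j), snd (ed j)}" for j
  have I1: "td r g b {} \<in> edge_ideal E" for b :: "nat set \<Rightarrow> ('v,'k) mpoly"
  proof -
    have "td r g b {} = (\<Sum>j\<in>{..<r}. b {j} * (var (fst (ed j)) * var (snd (ed j))))"
    proof -
      have "td r g b {} = (\<Sum>j\<in>{..<r}. sg j {} * mono (US g {j} - US g {}) * b {j})"
        by (simp add: td_def)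
      also have "\<dots> = (\<Sum>j\<in>{..<r}. b {j} * (var (fst (ed j)) * var (snd (ed j))))"
      proof (rule sum.cong[OF refl])
        fix j assume "j \<in> {..<r}"
        then have "ed j \<in> Ed" using ed by (auto simp: bij_betw_def r_def)
        then have "fst (ed j) \<noteq> snd (ed j)" using G by (auto simp: Ed_def simple_graph_def)
        then show "sg j {} * mono (US g {j} - US g {}) * b {j} = b {j} * (var (fst (ed j)) * var (snd (ed j)))"
          by (simp add: sg_def US_def g_def var_mult)
      qed
      finally show ?thesis .
    qed
    also have "\<dots> \<in> edge_ideal E"
    proof (rule ei_sum)
      fix j assume "j \<in> {..<r}"
      then have "ed j \<in> Ed" using ed by (auto simp: bij_betw_def r_def)
      then have "E (fst (ed j)) (snd (ed j))" by (auto simp: Ed_def)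
      then show "b {j} * (var (fst (ed j)) * var (snd (ed j))) \<in> edge_ideal E" by (rule ei_edge)
    qed
    finally show ?thesis .
  qed
  have I2: "\<exists>j<r. g j \<subseteq> kys \<alpha>" if pp: "p \<in> edge_ideal E" "lkp p \<alpha> \<noteq> 0" for p :: "('v,'k) mpoly" and \<alpha>
  proof -
    obtain u v where uv: "E u v" "{u,v} \<subseteq> kys \<alpha>" using ei_keys[OF G pp] by blast
    then have "(u,v) \<in> ed ` {0..<r}" using ed by (auto simp: bij_betw_def r_def Ed_def)
    then obtain j where "j < r" "ed j = (u,v)" by auto
    then show ?thesis using uv by (intro exI[of _ j]) (auto simp: g_def)
  qed
  have "free_resolution (edge_ideal E :: ('v,'k) mpoly set) r (bsT r) (dT r g) (\<lambda>_. 1)"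
    by (rule taylor_resolution[OF ei_0 I1 I2])
  then show ?thesis by blast
qed

lemma td_zero: "td r g (\<lambda>_. 0) T = 0"
  by (simp add: td_def)

lemma td_diff: "td r g (\<lambda>S. c S - c' S) T = td r g c T - td r g c' T"
  by (simp add: td_def algebra_simps sum_subtractf)

lemma lmap_zero: "lmap a b M (\<lambda>_. 0) = (\<lambda>_. 0)"
  by (simp add: lmap_def fun_eq_iff)

lemma lmap_diff: "lmap a b M (\<lambda>k. v k - w k) = (\<lambda>\<rho>. lmap a b M v \<rho> - lmap a b M w \<rho>)"
  by (simp add: lmap_def fun_eq_iff algebra_simps sum_subtractf)

lemma lmap_b0: "lmap a 0 M v = (\<lambda>_. 0)"
  by (simp add: lmap_def fun_eq_iff)

lemma lmap_vec_in: "vec_in a (lmap a b M v)"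
  by (simp add: lmap_def vec_in_def)

definition Kv :: "nat \<Rightarrow> (nat \<Rightarrow> 'v::finite set) \<Rightarrow> (nat set \<Rightarrow> nat \<Rightarrow> ('v,'k::comm_ring_1) mpoly) \<Rightarrow> nat set \<Rightarrow> nat \<Rightarrow> ('v,'k) mpoly" where
  "Kv r g X = (\<lambda>T k. td r g (\<lambda>S. X S k) T)"

definition Dv :: "nat \<Rightarrow> nat \<Rightarrow> (nat \<Rightarrow> nat \<Rightarrow> 'a::comm_ring_1) \<Rightarrow> (nat set \<Rightarrow> nat \<Rightarrow> 'a) \<Rightarrow> nat set \<Rightarrow> nat \<Rightarrow> 'a" where
  "Dv a b M X = (\<lambda>S. lmap a b M (X S))"

definition vdeg :: "nat \<Rightarrow> nat \<Rightarrow> (nat set \<Rightarrow> nat \<Rightarrow> 'a::zero) \<Rightarrow> bool" where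
  "vdeg r p X \<longleftrightarrow> (\<forall>S. X S \<noteq> (\<lambda>_. 0) \<longrightarrow> S \<subseteq> {..<r} \<and> card S = p)"

definition vin :: "nat \<Rightarrow> (nat set \<Rightarrow> nat \<Rightarrow> 'a::zero) \<Rightarrow> bool" where
  "vin b X \<longleftrightarrow> (\<forall>S. vec_in b (X S))"

lemma vdeg_comp: "vdeg r p X \<Longrightarrow> X S k \<noteq> 0 \<Longrightarrow> S \<subseteq> {..<r} \<and> card S = p"
proof -
  assume d: "vdeg r p X" and nz: "X S k \<noteq> 0"
  then have "X S \<noteq> (\<lambda>_. 0)" by auto
  then show ?thesis using d by (simp add: vdeg_def)
qed

lemma Kv_Dv: "Kv r g (Dv a b M X) = Dv a b M (Kv r g X)"
proof (intro ext)
  fix T \<rho>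
  show "Kv r g (Dv a b M X) T \<rho> = Dv a b M (Kv r g X) T \<rho>"
  proof (cases "\<rho> < a")
    case True
    have "Kv r g (Dv a b M X) T \<rho> = td r g (\<lambda>S. \<Sum>c<b. M \<rho> c * X S c) T"
      using True by (simp add: Kv_def Dv_def lmap_def)
    also have "\<dots> = (\<Sum>c<b. M \<rho> c * td r g (\<lambda>S. X S c) T)" by (rule td_lin)
    finally show ?thesis using True by (simp add: Kv_def Dv_def lmap_def)
  next
    case False
    then show ?thesis by (simp add: Kv_def Dv_def lmap_def td_zero)
  qed
qed

lemma Kv_deg:
  assumes d: "vdeg r (Suc p) X"
  shows "vdeg r p (Kv r g X)"
  unfolding vdeg_def
proof (intro allI impI)
  fix T assume nz: "Kv r g X T \<noteq> (\<lambda>_. 0)"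
  then obtain k where k: "td r g (\<lambda>S. X S k) T \<noteq> 0" by (auto simp: Kv_def)
  have "deg r (Suc p) (\<lambda>S. X S k)" using vdeg_comp[OF d] by (simp add: deg_def)
  then have "deg r p (td r g (\<lambda>S. X S k))" by (rule td_deg)
  then show "T \<subseteq> {..<r} \<and> card T = p" using k by (auto simp: deg_def)
qed

lemma Kv_deg0: "vdeg r 0 X \<Longrightarrow> Kv r g X = (\<lambda>_ _. 0)"
proof (intro ext)
  fix T k assume d: "vdeg r 0 X"
  have "deg r 0 (\<lambda>S. X S k)" using vdeg_comp[OF d] by (simp add: deg_def)
  then show "Kv r g X T k = 0" by (simp add: Kv_def td_deg0)
qed

lemma Kv_vin: "vin b X \<Longrightarrow> vin b (Kv r g X)"
  by (simp add: vin_def vec_in_def Kv_def td_zero)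

lemma Dv_vin: "vin a (Dv a b M X)"
  by (simp add: vin_def Dv_def lmap_vec_in)

lemma Dv_deg: "vdeg r p X \<Longrightarrow> vdeg r p (Dv a b M X)"
  unfolding vdeg_def Dv_def by (metis lmap_zero)

lemma Kv_Kv: "Kv r g (Kv r g X) = (\<lambda>_ _. 0)"
  by (simp add: Kv_def td_td fun_eq_iff)

lemma Kv_diff: "Kv r g (\<lambda>S k. X S k - Y S k) = (\<lambda>T k. Kv r g X T k - Kv r g Y T k)"
  by (simp add: Kv_def td_diff)

lemma Dv_diff: "Dv a b M (\<lambda>S k. X S k - Y S k) = (\<lambda>T k. Dv a b M X T k - Dv a b M Y T k)"
  by (simp add: Dv_def lmap_diff)

lemma koszul_exact:
  fixes X :: "nat set \<Rightarrow> nat \<Rightarrow> ('v::finite,'k::comm_ring_1) mpoly"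
  assumes p: "p \<ge> 1" and d: "vdeg r p X" and v: "vin b X" and z: "Kv r g X = (\<lambda>_ _. 0)"
  shows "\<exists>Y. vdeg r (Suc p) Y \<and> vin b Y \<and> Kv r g Y = X"
proof -
  have ex: "\<exists>Yk. deg r (Suc p) Yk \<and> (\<forall>T. td r g Yk T = X T k)" for k
  proof -
    have dk: "\<And>S. X S k \<noteq> 0 \<Longrightarrow> S \<subseteq> {..<r} \<and> card S = p" using vdeg_comp[OF d] by blast
    have cy: "\<And>T. td r g (\<lambda>S. X S k) T = 0" using z by (simp add: Kv_def fun_eq_iff)
    have dd: "deg r p (\<lambda>S. X S k)" using dk by (simp add: deg_def)
    have H: "\<exists>j<r. g j \<subseteq> kys \<alpha>" if "coef g (\<lambda>S. X S k) \<alpha> S \<noteq> 0" for \<alpha> S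
      by (rule H_auto[OF dd p that])
    have "\<exists>b. (\<forall>S. b S \<noteq> 0 \<longrightarrow> S \<subseteq> {..<r} \<and> card S = Suc p) \<and> (\<forall>T. td r g b T = X T k)"
      by (rule taylor_exact, rule cy, erule H, erule dk)
    then show ?thesis by (simp add: deg_def)
  qed
  define Y0 where "Y0 k = (SOME Yk. deg r (Suc p) Yk \<and> (\<forall>T. td r g Yk T = X T k))" for k
  have Y0: "deg r (Suc p) (Y0 k) \<and> (\<forall>T. td r g (Y0 k) T = X T k)" for k
    unfolding Y0_def by (rule someI_ex[OF ex])
  define Y where "Y S k = (if k < b then Y0 k S else 0)" for S k
  have "vdeg r (Suc p) Y"
    unfolding vdeg_def
  proof (intro allI impI)
    fix S assume nz: "Y S \<noteq> (\<lambda>_. 0)"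
    have "\<exists>k. Y S k \<noteq> 0"
    proof (rule ccontr)
      assume "\<not> (\<exists>k. Y S k \<noteq> 0)"
      then have "Y S = (\<lambda>_. 0)" by auto
      then show False using nz by simp
    qed
    then obtain k where "Y0 k S \<noteq> 0" by (auto simp: Y_def split: if_splits)
    then show "S \<subseteq> {..<r} \<and> card S = Suc p" using Y0[of k] by (auto simp: deg_def)
  qed
  moreover have "vin b Y" by (simp add: vin_def vec_in_def Y_def)
  moreover have "Kv r g Y = X"
  proof (intro ext)
    fix T k
    show "Kv r g Y T k = X T k"
    proof (cases "k < b")
      case True then show ?thesis using Y0[of k] by (simp add: Kv_def Y_def)
    next
      case False then show ?thesis using v by (simp add: Kv_def Y_def td_zero vin_def vec_in_def)
    qed
  qed
  ultimately show ?thesis by blast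
qed

lemma vdeg_diff:
  fixes X Y :: "nat set \<Rightarrow> nat \<Rightarrow> 'a::ab_group_add"
  assumes dX: "vdeg r p X" and dY: "vdeg r p Y"
  shows "vdeg r p (\<lambda>S k. X S k - Y S k)"
  unfolding vdeg_def
proof (intro allI impI)
  fix S assume nz: "(\<lambda>k. X S k - Y S k) \<noteq> (\<lambda>_. 0)"
  have "X S \<noteq> (\<lambda>_. 0) \<or> Y S \<noteq> (\<lambda>_. 0)"
  proof (rule ccontr)
    assume "\<not> ?thesis"
    then have "(\<lambda>k. X S k - Y S k) = (\<lambda>_. 0)" by simp
    then show False using nz by simp
  qed
  then show "S \<subseteq> {..<r} \<and> card S = p" using dX dY by (auto simp: vdeg_def)
qed

lemma vin_diff:
  fixes X Y :: "nat set \<Rightarrow> nat \<Rightarrow> 'a::ab_group_add"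
  shows "vin b X \<Longrightarrow> vin b Y \<Longrightarrow> vin b (\<lambda>S k. X S k - Y S k)"
  unfolding vin_def vec_in_def by auto

lemma lift_gen:
  assumes ex: "\<And>T. \<exists>w. vec_in b w \<and> W T = lmap a b M w" and d: "vdeg r q W"
  shows "\<exists>X'. vin b X' \<and> vdeg r q X' \<and> W = Dv a b M X'"
proof -
  define X' where "X' T = (if W T = (\<lambda>_. 0) then (\<lambda>_. 0) else (SOME w. vec_in b w \<and> W T = lmap a b M w))" for T
  have s: "vec_in b (X' T) \<and> W T = lmap a b M (X' T)" for T
  proof (cases "W T = (\<lambda>_. 0)")
    case True then show ?thesis by (simp add: X'_def vec_in_def lmap_zero)
  next
    case False then show ?thesis unfolding X'_def using someI_ex[OF ex[of T]] by simp
  qed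
  have "vdeg r q X'" using d by (auto simp: vdeg_def X'_def)
  moreover have "vin b X'" using s by (simp add: vin_def)
  moreover have "W = Dv a b M X'" using s by (simp add: Dv_def fun_eq_iff)
  ultimately show ?thesis by blast
qed

lemma DD:
  assumes FR: "free_resolution I n bs d e" and j: "1 \<le> j" "j \<le> n" and Z: "vin (bs (Suc j)) Z"
  shows "Dv (bs (j - 1)) (bs j) (d j) (Dv (bs j) (bs (Suc j)) (d (Suc j)) Z) = (\<lambda>_ _. 0)"
proof (intro ext)
  fix S k
  have ex: "\<forall>v. vec_in (bs j) v \<longrightarrow> (lmap (bs (j - 1)) (bs j) (d j) v = (\<lambda>_. 0) \<longleftrightarrow>
      (\<exists>w. vec_in (bs (Suc j)) w \<and> v = lmap (bs j) (bs (Suc j)) (d (Suc j)) w))"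
    using FR j unfolding free_resolution_def by blast
  have v1: "vec_in (bs j) (lmap (bs j) (bs (Suc j)) (d (Suc j)) (Z S))" by (rule lmap_vec_in)
  have "lmap (bs (j - 1)) (bs j) (d j) (lmap (bs j) (bs (Suc j)) (d (Suc j)) (Z S)) = (\<lambda>_. 0)"
    using ex[rule_format, OF v1] Z unfolding vin_def by blast
  then show "Dv (bs (j - 1)) (bs j) (d j) (Dv (bs j) (bs (Suc j)) (d (Suc j)) Z) S k = 0"
    by (simp add: Dv_def)
qed

lemma Eps_D1:
  assumes FR: "free_resolution I n bs d e" and Z: "vin (bs 1) Z"
  shows "(\<Sum>k<bs 0. Dv (bs 0) (bs 1) (d 1) Z S k * e k) \<in> I"
proof -
  have ex: "\<forall>v. vec_in (bs 0) v \<longrightarrow> ((\<Sum>j<bs 0. v j * e j) \<in> I \<longleftrightarrow>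
         (\<exists>w. vec_in (bs 1) w \<and> v = lmap (bs 0) (bs 1) (d 1) w))"
    using FR unfolding free_resolution_def by blast
  have v1: "vec_in (bs 0) (lmap (bs 0) (bs 1) (d 1) (Z S))" by (rule lmap_vec_in)
  show ?thesis using ex[rule_format, OF v1] Z unfolding vin_def Dv_def by blast
qed

lemma chaseQ:
  fixes X :: "nat set \<Rightarrow> nat \<Rightarrow> ('v::finite,'k::comm_ring_1) mpoly"
  assumes FR: "free_resolution I n bs d e"
  shows "j + k = n \<Longrightarrow> 1 \<le> j \<Longrightarrow> n - j + 1 \<le> p \<Longrightarrow> vdeg r p X \<Longrightarrow> vin (bs j) X \<Longrightarrow>
    Dv (bs (j - 1)) (bs j) (d j) (Kv r g X) = (\<lambda>_ _. 0) \<Longrightarrow>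
    \<exists>Y Z. vdeg r (Suc p) Y \<and> vin (bs j) Y \<and> vdeg r p Z \<and> vin (bs (Suc j)) Z \<and>
      X = (\<lambda>S k. Kv r g Y S k + Dv (bs j) (bs (Suc j)) (d (Suc j)) Z S k)"
proof (induction k arbitrary: j p X)
  case 0
  then have jn: "j = n" by simp
  obtain p' where p': "p = Suc p'" using 0 by (cases p) auto
  have ex: "\<forall>v. vec_in (bs j) v \<longrightarrow> (lmap (bs (j - 1)) (bs j) (d j) v = (\<lambda>_. 0) \<longleftrightarrow>
      (\<exists>w. vec_in (bs (Suc j)) w \<and> v = lmap (bs j) (bs (Suc j)) (d (Suc j)) w))"
    using FR 0 unfolding free_resolution_def by simp
  have W: "\<exists>w. vec_in (bs (Suc j)) w \<and> Kv r g X T = lmap (bs j) (bs (Suc j)) (d (Suc j)) w" for T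
  proof -
    have "vec_in (bs j) (Kv r g X T)" using Kv_vin[OF 0(5)] by (simp add: vin_def)
    moreover have "lmap (bs (j - 1)) (bs j) (d j) (Kv r g X T) = (\<lambda>_. 0)"
      using 0(6) by (simp add: Dv_def fun_eq_iff)
    ultimately show ?thesis using ex by blast
  qed
  have bsn: "bs (Suc j) = 0" using FR jn by (simp add: free_resolution_def)
  have KX: "Kv r g X = (\<lambda>_ _. 0)"
  proof (intro ext)
    fix T k
    obtain w where "Kv r g X T = lmap (bs j) (bs (Suc j)) (d (Suc j)) w" using W by blast
    then show "Kv r g X T k = 0" using bsn by (simp add: lmap_b0)
  qed
  obtain Y where Y: "vdeg r (Suc p) Y" "vin (bs j) Y" "Kv r g Y = X"
    using koszul_exact[OF _ 0(4) 0(5) KX] 0(3) by auto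
  show ?case
    apply (rule exI[of _ Y], rule exI[of _ "\<lambda>_ _. 0"])
    using Y by (simp add: vdeg_def vin_def vec_in_def Dv_def lmap_zero)
next
  case (Suc k)
  then have jn: "j < n" "1 \<le> j" by auto
  obtain p' where p': "p = Suc p'" using Suc by (cases p) auto
  have ex: "\<forall>v. vec_in (bs j) v \<longrightarrow> (lmap (bs (j - 1)) (bs j) (d j) v = (\<lambda>_. 0) \<longleftrightarrow>
      (\<exists>w. vec_in (bs (Suc j)) w \<and> v = lmap (bs j) (bs (Suc j)) (d (Suc j)) w))"
    using FR jn unfolding free_resolution_def by simp
  have W: "\<exists>w. vec_in (bs (Suc j)) w \<and> Kv r g X T = lmap (bs j) (bs (Suc j)) (d (Suc j)) w" for T
  proof -
    have "vec_in (bs j) (Kv r g X T)" using Kv_vin[OF Suc(6)] by (simp add: vin_def)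
    moreover have "lmap (bs (j - 1)) (bs j) (d j) (Kv r g X T) = (\<lambda>_. 0)"
      using Suc(7) by (simp add: Dv_def fun_eq_iff)
    ultimately show ?thesis using ex by blast
  qed
  have dK: "vdeg r p' (Kv r g X)" using Kv_deg[of r p' X g] Suc(5) p' by simp
  obtain X' where X': "vin (bs (Suc j)) X'" "vdeg r p' X'" "Kv r g X = Dv (bs j) (bs (Suc j)) (d (Suc j)) X'"
    using lift_gen[OF W dK] by blast
  have "Dv (bs (Suc j - 1)) (bs (Suc j)) (d (Suc j)) (Kv r g X') = (\<lambda>_ _. 0)"
    using Kv_Dv[of r g "bs j" "bs (Suc j)" "d (Suc j)" X'] X'(3) Kv_Kv[of r g X] by simp
  then obtain Y' Z' where YZ: "vdeg r (Suc p') Y'" "vin (bs (Suc j)) Y'" "vdeg r p' Z'" "vin (bs (Suc (Suc j))) Z'"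
      "X' = (\<lambda>S k. Kv r g Y' S k + Dv (bs (Suc j)) (bs (Suc (Suc j))) (d (Suc (Suc j))) Z' S k)"
    using Suc.IH[of "Suc j" p' X'] Suc(2,4) jn X'(1,2) p' by auto
  define Dj where "Dj = Dv (bs j) (bs (Suc j)) (d (Suc j))"
  define W2 where "W2 = (\<lambda>S k. X S k - Dj Y' S k)"
  have DDz: "Dj (Dv (bs (Suc j)) (bs (Suc (Suc j))) (d (Suc (Suc j))) Z') = (\<lambda>_ _. 0)"
    using DD[OF FR, of "Suc j" Z'] jn YZ(4) by (simp add: Dj_def)
  have KY': "Kv r g Y' = (\<lambda>S k. X' S k - Dv (bs (Suc j)) (bs (Suc (Suc j))) (d (Suc (Suc j))) Z' S k)"
    using YZ(5) by (simp add: fun_eq_iff)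
  have "Kv r g W2 = (\<lambda>T k. Kv r g X T k - Dj (Kv r g Y') T k)"
    unfolding W2_def Kv_diff Dj_def Kv_Dv ..
  also have "\<dots> = (\<lambda>_ _. 0)"
    unfolding KY' Dj_def Dv_diff using DDz X'(3) by (simp add: Dj_def fun_eq_iff)
  finally have KW: "Kv r g W2 = (\<lambda>_ _. 0)" .
  have dW: "vdeg r p W2" unfolding W2_def Dj_def
    by (rule vdeg_diff[OF Suc(5) Dv_deg]) (use YZ(1) p' in simp)
  have vW: "vin (bs j) W2" unfolding W2_def Dj_def by (rule vin_diff[OF Suc(6) Dv_vin])
  obtain Y where Y: "vdeg r (Suc p) Y" "vin (bs j) Y" "Kv r g Y = W2"
    using koszul_exact[OF _ dW vW KW] p' by auto
  show ?case
  proof (intro exI conjI)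
    show "vdeg r (Suc p) Y" "vin (bs j) Y" by (fact Y(1)) (fact Y(2))
    show "vdeg r p Y'" using YZ(1) p' by simp
    show "vin (bs (Suc j)) Y'" by (fact YZ(2))
    show "X = (\<lambda>S k. Kv r g Y S k + Dv (bs j) (bs (Suc j)) (d (Suc j)) Y' S k)"
      using Y(3) by (simp add: W2_def Dj_def fun_eq_iff)
  qed
qed

lemma td_smult: "td r g (\<lambda>S. a * c S) T = a * td r g c T"
  by (simp add: td_def sum_distrib_left mult.left_commute)

lemma Eps_Kv: "(\<Sum>k<b. Kv r g X T k * e k) = td r g (\<lambda>S. \<Sum>k<b. X S k * e k) T"
proof -
  have "td r g (\<lambda>S. \<Sum>k<b. X S k * e k) T = td r g (\<lambda>S. \<Sum>k<b. e k * X S k) T"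
    by (simp add: mult.commute)
  also have "\<dots> = (\<Sum>k<b. e k * td r g (\<lambda>S. X S k) T)" by (rule td_lin)
  finally show ?thesis by (simp add: Kv_def mult.commute)
qed

lemma chase0:
  fixes X :: "nat set \<Rightarrow> nat \<Rightarrow> ('v::finite,'k::field) mpoly"
  assumes FR: "free_resolution (edge_ideal E) n bs d e" and m: "n + 1 \<le> m"
    and dX: "vdeg r m X" and vX: "vin (bs 0) X"
    and cyc: "\<And>T. (\<Sum>k<bs 0. Kv r g X T k * e k) \<in> edge_ideal E"
  shows "\<exists>Y. vdeg r (Suc m) Y \<and> (\<forall>S. (\<Sum>k<bs 0. X S k * e k) - (\<Sum>k<bs 0. Kv r g Y S k * e k) \<in> edge_ideal E)"
proof -
  obtain m' where m': "m = Suc m'" using m by (cases m) auto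
  have ex0: "\<forall>v. vec_in (bs 0) v \<longrightarrow> ((\<Sum>j<bs 0. v j * e j) \<in> edge_ideal E \<longleftrightarrow>
         (\<exists>w. vec_in (bs 1) w \<and> v = lmap (bs 0) (bs 1) (d 1) w))"
    using FR unfolding free_resolution_def by blast
  have W: "\<exists>w. vec_in (bs 1) w \<and> Kv r g X T = lmap (bs 0) (bs 1) (d 1) w" for T
  proof -
    have "vec_in (bs 0) (Kv r g X T)" using Kv_vin[OF vX] by (simp add: vin_def)
    then show ?thesis using ex0 cyc[of T] by blast
  qed
  have dK: "vdeg r m' (Kv r g X)" using Kv_deg[of r m' X g] dX m' by simp
  obtain X' where X': "vin (bs 1) X'" "vdeg r m' X'" "Kv r g X = Dv (bs 0) (bs 1) (d 1) X'"
    using lift_gen[OF W dK] by blast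
  show ?thesis
  proof (cases "n = 0")
    case True
    then have "bs 1 = 0" using FR by (simp add: free_resolution_def)
    then have KX: "Kv r g X = (\<lambda>_ _. 0)" using X'(3) by (simp add: Dv_def lmap_b0)
    obtain Y where Y: "vdeg r (Suc m) Y" "vin (bs 0) Y" "Kv r g Y = X"
      using koszul_exact[OF _ dX vX KX] m' by auto
    show ?thesis using Y by (intro exI[of _ Y]) (simp add: ei_0)
  next
    case False
    define D1 where "D1 = Dv (bs 0) (bs 1) (d 1)"
    define D2 where "D2 = Dv (bs 1) (bs 2) (d 2)"
    have "Dv (bs (1 - 1)) (bs 1) (d 1) (Kv r g X') = (\<lambda>_ _. 0)"
      using Kv_Dv[of r g "bs 0" "bs 1" "d 1" X'] X'(3) Kv_Kv[of r g X] by simp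
    then obtain Y' Z' where YZ: "vdeg r (Suc m') Y'" "vin (bs 1) Y'" "vdeg r m' Z'" "vin (bs (Suc 1)) Z'"
        "X' = (\<lambda>S k. Kv r g Y' S k + Dv (bs 1) (bs (Suc 1)) (d (Suc 1)) Z' S k)"
      using chaseQ[OF FR, where j=1 and k="n - 1" and p=m' and X=X' and r=r and g=g] False m m' X'(1,2) by auto
    have DDz: "D1 (D2 Z') = (\<lambda>_ _. 0)"
      using DD[OF FR, of 1 Z'] False YZ(4) by (simp add: D1_def D2_def numeral_2_eq_2)
    define W2 where "W2 = (\<lambda>S k. X S k - D1 Y' S k)"
    have KY': "Kv r g Y' = (\<lambda>S k. X' S k - D2 Z' S k)"
      using YZ(5) by (simp add: fun_eq_iff D2_def numeral_2_eq_2)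
    have "Kv r g W2 = (\<lambda>T k. Kv r g X T k - D1 (Kv r g Y') T k)"
      unfolding W2_def Kv_diff D1_def Kv_Dv ..
    also have "\<dots> = (\<lambda>_ _. 0)"
      unfolding KY' D1_def Dv_diff using DDz X'(3) by (simp add: D1_def fun_eq_iff)
    finally have KW: "Kv r g W2 = (\<lambda>_ _. 0)" .
    have dW: "vdeg r m W2" unfolding W2_def D1_def
      by (rule vdeg_diff[OF dX Dv_deg]) (use YZ(1) m' in simp)
    have vW: "vin (bs 0) W2" unfolding W2_def D1_def by (rule vin_diff[OF vX Dv_vin])
    obtain Y where Y: "vdeg r (Suc m) Y" "vin (bs 0) Y" "Kv r g Y = W2"
      using koszul_exact[OF _ dW vW KW] m' by auto
    have "(\<Sum>k<bs 0. X S k * e k) - (\<Sum>k<bs 0. Kv r g Y S k * e k) = (\<Sum>k<bs 0. D1 Y' S k * e k)" for S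
      unfolding Y(3) W2_def by (simp add: sum_subtractf[symmetric] left_diff_distrib)
    moreover have "(\<Sum>k<bs 0. D1 Y' S k * e k) \<in> edge_ideal E" for S
      unfolding D1_def by (rule Eps_D1[OF FR YZ(2)])
    ultimately show ?thesis using Y(1) by auto
  qed
qed

lemma tor_vanish:
  fixes z :: "nat set \<Rightarrow> ('v::finite,'k::field) mpoly"
  assumes FR: "free_resolution (edge_ideal E :: ('v,'k) mpoly set) n bs d e" and m: "n + 1 \<le> m"
    and dz: "deg r m z" and cyc: "\<And>T. td r g z T \<in> edge_ideal E"
  shows "\<exists>y. deg r (Suc m) y \<and> (\<forall>S. z S - td r g y S \<in> edge_ideal E)"
proof -
  obtain u :: "nat \<Rightarrow> ('v,'k) mpoly" where u: "vec_in (bs 0) u" "(\<Sum>j<bs 0. u j * e j) - 1 \<in> edge_ideal E"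
    using FR unfolding free_resolution_def by blast
  define eu where "eu = (\<Sum>j<bs 0. u j * e j)"
  define X where "X S k = z S * u k" for S k
  have vX: "vin (bs 0) X" using u(1) by (simp add: vin_def vec_in_def X_def)
  have dX: "vdeg r m X"
    unfolding vdeg_def
  proof (intro allI impI)
    fix S assume "X S \<noteq> (\<lambda>_. 0)"
    then have "z S \<noteq> 0" by (auto simp: X_def)
    then show "S \<subseteq> {..<r} \<and> card S = m" using dz by (simp add: deg_def)
  qed
  have EX: "(\<Sum>k<bs 0. X S k * e k) = eu * z S" for S
    by (simp add: X_def eu_def sum_distrib_left sum_distrib_right mult.assoc mult.commute mult.left_commute)
  have cyc': "(\<Sum>k<bs 0. Kv r g X T k * e k) \<in> edge_ideal E" for T
    unfolding Eps_Kv EX td_smult by (rule ei_mult[OF cyc])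
  obtain Y where Y: "vdeg r (Suc m) Y" "\<forall>S. (\<Sum>k<bs 0. X S k * e k) - (\<Sum>k<bs 0. Kv r g Y S k * e k) \<in> edge_ideal E"
    using chase0[OF FR m dX vX cyc'] by blast
  define y where "y S = (\<Sum>k<bs 0. Y S k * e k)" for S
  have dy: "deg r (Suc m) y"
    unfolding deg_def
  proof (intro allI impI)
    fix S assume nz: "y S \<noteq> 0"
    have "Y S \<noteq> (\<lambda>_. 0)"
    proof
      assume "Y S = (\<lambda>_. 0)" then have "y S = 0" by (simp add: y_def)
      then show False using nz by simp
    qed
    then show "S \<subseteq> {..<r} \<and> card S = Suc m" using Y(1) by (simp add: vdeg_def)
  qed
  have "z S - td r g y S \<in> edge_ideal E" for S
  proof -
    have ty: "td r g y S = (\<Sum>k<bs 0. Kv r g Y S k * e k)"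
      unfolding Eps_Kv y_def ..
    have A: "eu * z S - td r g y S \<in> edge_ideal E"
      unfolding ty EX[of S, symmetric] using Y(2) by blast
    have B: "z S * (eu - 1) \<in> edge_ideal E" using u(2) ei_mult by (simp add: eu_def)
    have eq: "z S - td r g y S = (eu * z S - td r g y S) - z S * (eu - 1)" by (simp add: algebra_simps)
    show ?thesis by (subst eq) (rule ei_diff[OF A B])
  qed
  then show ?thesis using dy by blast
qed

lemma lkp_var_mult: "lkp (var v * q) (Poly_Mapping.single v 1) = lkp (q :: ('v::finite,'k::comm_ring_1) mpoly) 0"
proof -
  have "ind {v} = Poly_Mapping.single v 1" by (rule ind_single)
  then show ?thesis by (simp add: var_mono lookup_mono_mult)
qed

lemma ei_single:
  assumes G: "simple_graph E" and p: "p \<in> edge_ideal E"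
  shows "lkp p (Poly_Mapping.single v 1) = 0"
proof (rule ccontr)
  assume "lkp p (Poly_Mapping.single v 1) \<noteq> 0"
  then obtain a b where ab: "E a b" "{a,b} \<subseteq> kys (Poly_Mapping.single v (1::nat))" using ei_keys[OF G p] by blast
  then have "a = v" "b = v" by auto
  then show False using ab G by (simp add: simple_graph_def)
qed

lemma sets_remove2:
  assumes "j1 < j2" "j2 < (N::nat)"
  shows "card {t\<in>{..<N} - {j1,j2}. t < j1} = j1" "card {t\<in>{..<N} - {j1,j2}. t < j2} = j2 - 1"
proof -
  have "{t\<in>{..<N} - {j1,j2}. t < j1} = {..<j1}" using assms by auto
  then show "card {t\<in>{..<N} - {j1,j2}. t < j1} = j1" by simp
  have "{t\<in>{..<N} - {j1,j2}. t < j2} = {..<j2} - {j1}" using assms by auto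
  then show "card {t\<in>{..<N} - {j1,j2}. t < j2} = j2 - 1" using assms by simp
qed

lemma sets_remove1:
  assumes "l < (N::nat)"
  shows "card {t\<in>{..<N} - {l}. t < l} = l"
proof -
  have "{t\<in>{..<N} - {l}. t < l} = {..<l}" using assms by auto
  then show ?thesis by simp
qed

lemma neg1_cancel: "j1 < j2 \<Longrightarrow> (-1::'a::comm_ring_1) ^ j1 * (-1) ^ j2 + (-1) ^ (j2 - 1) * (-1) ^ j1 = 0"
proof -
  assume "j1 < j2"
  then obtain s where s: "j2 = Suc s" by (cases j2) auto
  show ?thesis by (simp add: s algebra_simps)
qed

lemma img_insert_diff:
  assumes "inj_on w U" "j \<in> U" "T \<subseteq> U" "j \<notin> T"
  shows "w ` insert j T - w ` T = {w j}"
proof -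
  have "w j \<notin> w ` T" using assms inj_on_image_mem_iff[of w U j T] by blast
  then show ?thesis by auto
qed

theorem theorem4p5:
  fixes E :: "'v::finite \<Rightarrow> 'v \<Rightarrow> bool" and W :: "'v set"
  assumes "simple_graph E"
    and "W \<noteq> {}"
    and "\<not> connected_on W (complement_on W E)"
  shows "pd TYPE('k::field) E \<ge> card W - 1"
proof -
  note G = assms(1)
  define R where "R = {(a, b). a \<in> W \<and> b \<in> W \<and> complement_on W E a b}"
  obtain x y where xy: "x \<in> W" "y \<in> W" "(x, y) \<notin> R\<^sup>*"
    using assms(2,3) unfolding connected_on_def R_def by blast
  define A where "A = {v \<in> W. (x, v) \<in> R\<^sup>*}"
  have xA: "x \<in> A" by (simp add: A_def xy)
  have yA: "y \<notin> A" using xy by (simp add: A_def)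
  have cross: "E a b" if ab: "a \<in> A" "b \<in> W" "b \<notin> A" for a b
  proof (rule ccontr)
    assume nE: "\<not> E a b"
    have "a \<noteq> b" using ab by auto
    then have r1: "(a, b) \<in> R" using ab nE by (auto simp: R_def A_def complement_on_def)
    have r2: "(x, a) \<in> R\<^sup>*" using ab(1) by (simp add: A_def)
    have "(x, b) \<in> R\<^sup>*" by (rule rtrancl_into_rtrancl[OF r2 r1])
    then show False using ab by (simp add: A_def)
  qed
  define N where "N = card W"
  have finW: "finite W" by simp
  obtain w where w: "bij_betw w {0..<N} W" using ex_bij_betw_nat_finite[OF finW] unfolding N_def by blast
  have winj: "inj_on w {..<N}" and wim: "w ` {..<N} = W"
    using w by (auto simp: bij_betw_def atLeast0LessThan)
  have "x \<noteq> y" using xA yA by auto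
  then have "card {x, y} = 2" by simp
  moreover have "card {x, y} \<le> N" unfolding N_def by (rule card_mono[OF finW]) (use xy in auto)
  ultimately have N2: "N \<ge> 2" by simp
  define m where "m = N - 1"
  define g where "g j = {w j}" for j :: nat
  have USg: "US g S = w ` S" for S by (auto simp: US_def g_def)
  define zz where "zz l = (if w l \<in> A then (-1) ^ l * var (w l) else (0 :: ('v,'k) mpoly))" for l
  define z where "z S = (\<Sum>l \<in> {l. l < N \<and> S = {..<N} - {l}}. zz l)" for S
  have z_at: "z ({..<N} - {l}) = zz l" if l: "l < N" for l
  proof -
    have "l' = l" if "l' < N" "{..<N} - {l} = {..<N} - {l'}" for l'
    proof (rule ccontr)
      assume "l' \<noteq> l"
      then have "l' \<in> {..<N} - {l}" using that by auto
      then show False using that by auto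
    qed
    then have "{l'. l' < N \<and> {..<N} - {l} = {..<N} - {l'}} = {l}" using l by auto
    then show ?thesis by (simp add: z_def)
  qed
  have z_nz: "\<exists>l<N. S = {..<N} - {l}" if "z S \<noteq> 0" for S
  proof (rule ccontr)
    assume "\<not> ?thesis"
    then have e: "{l. l < N \<and> S = {..<N} - {l}} = {}" by auto
    have "z S = 0" unfolding z_def e by simp
    then show False using that by simp
  qed
  have dz: "deg N m z"
    unfolding deg_def
  proof (intro allI impI)
    fix S assume "z S \<noteq> 0"
    then obtain l where "l < N" "S = {..<N} - {l}" using z_nz by blast
    then show "S \<subseteq> {..<N} \<and> card S = m" by (simp add: m_def)
  qed
  have cyc: "td N g z T \<in> edge_ideal E" for T
  proof (cases "td N g z T = 0")
    case True then show ?thesis by (simp add: ei_0)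
  next
    case False
    have "m = Suc (N - 2)" using N2 by (simp add: m_def)
    then have "deg N (N - 2) (td N g z)" using td_deg[of N "N - 2" z g] dz by simp
    then have T: "T \<subseteq> {..<N}" "card T = N - 2" using False by (auto simp: deg_def)
    have "card ({..<N} - T) = 2" using T N2 by (simp add: card_Diff_subset finite_subset)
    then obtain a b where ab: "{..<N} - T = {a, b}" "a \<noteq> b" by (auto simp: card_2_iff)
    obtain j1 j2 where C: "{..<N} - T = {j1, j2}" "j1 < j2"
    proof (cases "a < b")
      case True then show ?thesis using that ab by blast
    next
      case False then have "b < a" using ab by simp
      then show ?thesis using that[of b a] ab by (simp add: insert_commute)
    qed
    have j: "j1 < N" "j2 < N" "j1 \<notin> T" "j2 \<notin> T" using C by auto
    have TT: "T = {..<N} - {j1, j2}" using C T by auto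
    have ins1: "insert j1 T = {..<N} - {j2}" using TT j C by auto
    have ins2: "insert j2 T = {..<N} - {j1}" using TT j C by auto
    have D1: "US g (insert j1 T) - US g T = {w j1}"
      unfolding USg by (rule img_insert_diff[OF winj]) (use j T in auto)
    have D2: "US g (insert j2 T) - US g T = {w j2}"
      unfolding USg by (rule img_insert_diff[OF winj]) (use j T in auto)
    have s1: "sg j1 T = ((-1) ^ j1 :: ('v,'k) mpoly)"
      unfolding sg_def TT using sets_remove2[OF C(2) j(2)] by simp
    have s2: "sg j2 T = ((-1) ^ (j2 - 1) :: ('v,'k) mpoly)"
      unfolding sg_def TT using sets_remove2[OF C(2) j(2)] by simp
    have "td N g z T = (\<Sum>j\<in>{j1, j2}. sg j T * mono (US g (insert j T) - US g T) * z (insert j T))"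
      unfolding td_def C(1) ..
    also have "\<dots> = (-1) ^ j1 * var (w j1) * zz j2 + (-1) ^ (j2 - 1) * var (w j2) * zz j1"
    proof -
      have D1': "US g ({..<N} - {j2}) - US g T = {w j1}" using D1 ins1 by simp
      have D2': "US g ({..<N} - {j1}) - US g T = {w j2}" using D2 ins2 by simp
      show ?thesis using C(2) by (simp add: s1 s2 D1' D2' ins1 ins2 z_at j var_mono)
    qed
    finally have tdz: "td N g z T = (-1) ^ j1 * var (w j1) * zz j2 + (-1) ^ (j2 - 1) * var (w j2) * zz j1" .
    have wW: "w j1 \<in> W" "w j2 \<in> W" using wim j by auto
    show ?thesis
    proof (cases "w j1 \<in> A"; cases "w j2 \<in> A")
      assume a1: "w j1 \<in> A" and a2: "w j2 \<in> A"
      have "td N g z T = ((-1) ^ j1 * (-1) ^ j2 + (-1) ^ (j2 - 1) * (-1) ^ j1) * (var (w j1) * var (w j2))"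
        unfolding tdz zz_def using a1 a2 by (simp add: algebra_simps)
      also have "\<dots> = 0" by (simp only: neg1_cancel[OF C(2), where 'a="('v,'k) mpoly"] mult_zero_left)
      finally show ?thesis by (simp add: ei_0)
    next
      assume a1: "w j1 \<in> A" and a2: "w j2 \<notin> A"
      have "td N g z T = ((-1) ^ (j2 - 1) * (-1) ^ j1) * (var (w j1) * var (w j2))"
        unfolding tdz zz_def using a1 a2 by (simp add: algebra_simps)
      then show ?thesis using ei_edge[where E=E and u="w j1" and v="w j2", OF cross[OF a1 wW(2) a2]] by simp
    next
      assume a1: "w j1 \<notin> A" and a2: "w j2 \<in> A"
      have "td N g z T = ((-1) ^ j1 * (-1) ^ j2) * (var (w j2) * var (w j1))"
        unfolding tdz zz_def using a1 a2 by (simp add: algebra_simps)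
      then show ?thesis using ei_edge[where E=E and u="w j2" and v="w j1", OF cross[OF a2 wW(1) a1]] by simp
    next
      assume a1: "w j1 \<notin> A" and a2: "w j2 \<notin> A"
      have "td N g z T = 0" unfolding tdz zz_def using a1 a2 by simp
      then show ?thesis by (simp add: ei_0)
    qed
  qed
  define P where "P n = (\<exists>bs d e. free_resolution (edge_ideal E :: ('v,'k) mpoly set) n bs d e)" for n
  have "\<exists>n. P n" using pd_exists[OF G] unfolding P_def by blast
  then have "P (LEAST n. P n)" by (rule LeastI_ex)
  moreover have pdeq: "pd TYPE('k) E = (LEAST n. P n)" by (simp add: pd_def P_def)
  ultimately obtain bs d e where FR: "free_resolution (edge_ideal E :: ('v,'k) mpoly set) (pd TYPE('k) E) bs d e"
    unfolding P_def by auto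
  show ?thesis
  proof (rule ccontr)
    assume "\<not> card W - 1 \<le> pd TYPE('k) E"
    then have nm: "pd TYPE('k) E + 1 \<le> m" by (simp add: m_def N_def)
    obtain yv where yv: "deg N (Suc m) yv" "\<forall>S. z S - td N g yv S \<in> edge_ideal E"
      using tor_vanish[OF FR nm dz cyc] by blast
    define c where "c = yv {..<N}"
    have tdy: "td N g yv ({..<N} - {l}) = (-1) ^ l * var (w l) * c" if l: "l < N" for l
    proof -
      have Cset: "{..<N} - ({..<N} - {l}) = {l}" using l by auto
      have ins: "insert l ({..<N} - {l}) = {..<N}" using l by auto
      have "US g (insert l ({..<N} - {l})) - US g ({..<N} - {l}) = {w l}"
        unfolding USg by (rule img_insert_diff[OF winj]) (use l in auto)
      then have D: "US g {..<N} - US g ({..<N} - {l}) = {w l}" using ins by simp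
      have sgl: "sg l ({..<N} - {l}) = ((-1) ^ l :: ('v,'k) mpoly)"
        unfolding sg_def sets_remove1[OF l] ..
      have "td N g yv ({..<N} - {l}) = sg l ({..<N} - {l}) * mono (US g (insert l ({..<N} - {l})) - US g ({..<N} - {l})) * yv (insert l ({..<N} - {l}))"
        unfolding td_def Cset by simp
      also have "\<dots> = (-1) ^ l * var (w l) * c"
        unfolding ins D sgl c_def var_mono ..
      finally show ?thesis .
    qed
    obtain la where la: "la < N" "w la = x" using wim xy(1) by auto
    obtain lb where lb: "lb < N" "w lb = y" using wim xy(2) by auto
    have I1: "(-1) ^ la * (var x * (1 - c)) \<in> edge_ideal E"
    proof -
      have "z ({..<N} - {la}) - td N g yv ({..<N} - {la}) = (-1) ^ la * (var x * (1 - c))"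
        using z_at[OF la(1)] tdy[OF la(1)] la xA by (simp add: zz_def algebra_simps)
      then show ?thesis using yv(2) by metis
    qed
    have I2: "(- ((-1) ^ lb)) * (var y * c) \<in> edge_ideal E"
    proof -
      have "z ({..<N} - {lb}) - td N g yv ({..<N} - {lb}) = (- ((-1) ^ lb)) * (var y * c)"
        using z_at[OF lb(1)] tdy[OF lb(1)] lb yA by (simp add: zz_def algebra_simps)
      then show ?thesis using yv(2) by metis
    qed
    have L1: "lkp ((-1) ^ la * (var x * (1 - c))) (Poly_Mapping.single x 1) = 0"
      by (rule ei_single[OF G I1])
    then have "(-1) ^ la * lkp (var x * (1 - c)) (Poly_Mapping.single x 1) = 0"
      unfolding lkp_neg1_pow_mult .
    then have "(-1) ^ la * lkp (1 - c) 0 = 0" unfolding lkp_var_mult .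
    then have "(-1) ^ la * (1 - lkp c 0) = (0::'k)" by (simp add: lookup_minus)
    then have c1: "lkp c 0 = 1" by simp
    have L2: "lkp ((- ((-1) ^ lb)) * (var y * c)) (Poly_Mapping.single y 1) = 0"
      by (rule ei_single[OF G I2])
    then have "- ((-1) ^ lb * lkp (var y * c) (Poly_Mapping.single y 1)) = 0"
      unfolding minus_mult_left[symmetric] lkp_neg1_pow_mult lookup_uminus .
    then have "(-1) ^ lb * lkp c 0 = (0::'k)" unfolding lkp_var_mult by simp
    then have "lkp c 0 = 0" by simp
    then show False using c1 by simp
  qed
qed


end
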